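(* Let $n>1$, $\mathcal D=(0,1)^n$, integers $\ell_0\ge2$ and $L>\ell_0$, and constants $\eta,\rho\in\mathbb R$, $\boldsymbol\beta\in\mathbb R^n$. Let $a(u,v)=\int_{\mathcal D}(\eta\nabla u\cdot\overline{\nabla v}+\boldsymbol\beta\cdot\nabla u\,\bar v+\rho u\bar v)$ and $\mu_{\mathbf q}=\sup_{\mathbf j\in\mathcal J^{\rm iso}}|a(\widehat\psi^{\rm iso}_{\mathbf j},\widehat\xi_{\mathbf q})|^2$, $\mathbf q\in\mathbb Z^n$ (see context). Then $$\mu_{\mathbf 0}\lesssim|\rho|^2 2^{-(2+n)\ell_0},$$ and for all $\mathbf q\ne\mathbf 0$, $$\mu_{\mathbf q}\lesssim\Big(|\eta|^2+\frac{\|\boldsymbol\beta\|_2^2}{\|\mathbf q\|_2^2}+\frac{|\rho|^2}{\|\mathbf q\|_2^4}\Big)\min\Big\{\frac{(1+2^{2(-\frac n2+2\|\mathbf q\|_0-1)L})\|\mathbf q\|_2^2}{|\widehat{\mathbf q}|^{\mathbf 4}},\ \frac{2^{-(n-\|\mathbf q\|_0)\ell_0}\|\mathbf q\|_2^2}{\|\mathbf q\|_\infty^2|\widehat{\mathbf q}|^{\mathbf 1}}\Big\},$$ with hidden constants depending exponentially on $n$ (and not on $\mathbf q$, $L$ or the coefficients).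
   Context: 1D functions: $\varphi(x)=\max\{0,1-|x|\}$, $\psi(x)=\sum_{j=-1}^3b_j\varphi(2x-j)$ with $(b_{-1},\dots,b_3)=(\tfrac14,\tfrac12,-\tfrac32,\tfrac12,\tfrac14)$ (biorthogonal B-spline wavelets of order $(2,2)$), $\varphi_{\ell,k}=2^{\ell/2}\varphi(2^\ell\cdot-k)$, $\psi_{\ell,k}=2^{\ell/2}\psi(2^\ell\cdot-k)$, 1-periodized ($f^{\rm per}(x)=\sum_jf(x+j)$) on $(0,1)$. $\vartheta_{\ell,k,0}=\varphi_{\ell,k}$, $\vartheta_{\ell,k,1}=\psi_{\ell,k}$, $\psi^{\rm iso}_{\ell,\mathbf k,\mathbf e}(\mathbf x)=\prod_j\vartheta_{\ell,k_j,e_j}(x_j)$, indexed by $\mathbf j=(\ell,\mathbf k,\mathbf e)\in\mathcal J^{\rm iso}=\{\ell\in\mathbb N,\ \ell_0\le\ell<L,\ \mathbf k\in(\mathbb Z/(2^\ell\mathbb Z))^n,\ \mathbf e\in\{0,1\}^n\}$, normalized $\widehat\psi^{\rm iso}_{\mathbf j}=2^{-\ell}\psi^{\rm iso}_{\mathbf j}$. $\xi_{\mathbf q}(\mathbf x)=e^{2\pi i\mathbf q\cdot\mathbf x}$, $\widehat\xi_{\mathbf q}=(1+(2\pi\|\mathbf q\|_2)^2)^{-1/2}\xi_{\mathbf q}$. Notation: $\|\mathbf q\|_0$ = number of nonzero entries, $\widehat{\mathbf q}$ = restriction to nonzero entries, $|\mathbf x|^{\mathbf y}=\prod_j|x_j|^{y_j}$,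 $\mathbf 1,\mathbf 4$ constant vectors. *)

theory Defs
  imports "HOL-Analysis.Analysis"
begin

section \<open>1D biorthogonal B-spline wavelets of order (2,2), periodized\<close>

definition hat_phi :: "real \<Rightarrow> real" where
  "hat_phi x = max 0 (1 - \<bar>x\<bar>)"

definition wav_psi :: "real \<Rightarrow> real" where
  "wav_psi x = (1/4) * hat_phi (2*x + 1) + (1/2) * hat_phi (2*x)
              - (3/2) * hat_phi (2*x - 1) + (1/2) * hat_phi (2*x - 2)
              + (1/4) * hat_phi (2*x - 3)"

definition periodize :: "(real \<Rightarrow> real) \<Rightarrow> real \<Rightarrow> real" where
  "periodize f x = (\<Sum>\<^sub>\<infinity> j::int. f (x + of_int j))"

definition theta :: "nat \<Rightarrow> int \<Rightarrow> nat \<Rightarrow> real \<Rightarrow> real" where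
  "theta l k e = periodize (\<lambda>x. 2 powr (real l / 2) *
      (if e = 0 then hat_phi else wav_psi) (2 ^ l * x - of_int k))"

text \<open>Points of R^n are functions nat => real, only coordinates i < n matter.\<close>

definition psi_iso :: "nat \<Rightarrow> nat \<Rightarrow> (nat \<Rightarrow> int) \<Rightarrow> (nat \<Rightarrow> nat) \<Rightarrow> (nat \<Rightarrow> real) \<Rightarrow> complex" where
  "psi_iso n l k e x = complex_of_real (\<Prod>j<n. theta l (k j) (e j) (x j))"

definition psi_iso_hat :: "nat \<Rightarrow> nat \<Rightarrow> (nat \<Rightarrow> int) \<Rightarrow> (nat \<Rightarrow> nat) \<Rightarrow> (nat \<Rightarrow> real) \<Rightarrow> complex" where
  "psi_iso_hat n l k e x = complex_of_real (2 powr (- real l)) * psi_iso n l k e x"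

text \<open>Index set J^iso: l0 <= l < L, k in (Z/2^l Z)^n (representatives 0..2^l-1), e in {0,1}^n\<close>
definition J_iso :: "nat \<Rightarrow> nat \<Rightarrow> nat \<Rightarrow> (nat \<times> (nat \<Rightarrow> int) \<times> (nat \<Rightarrow> nat)) set" where
  "J_iso n l0 L = {(l, k, e). l0 \<le> l \<and> l < L \<and>
       k \<in> (\<Pi>\<^sub>E i\<in>{..<n}. {0..<2 ^ l}) \<and> e \<in> (\<Pi>\<^sub>E i\<in>{..<n}. {0, 1})}"

definition qnorm2_sq :: "nat \<Rightarrow> (nat \<Rightarrow> int) \<Rightarrow> real" where
  "qnorm2_sq n q = (\<Sum>i<n. (real_of_int (q i))\<^sup>2)"

definition xi :: "nat \<Rightarrow> (nat \<Rightarrow> int) \<Rightarrow> (nat \<Rightarrow> real) \<Rightarrow> complex" where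
  "xi n q x = exp (2 * pi * \<i> * complex_of_real (\<Sum>i<n. real_of_int (q i) * x i))"

definition xi_hat :: "nat \<Rightarrow> (nat \<Rightarrow> int) \<Rightarrow> (nat \<Rightarrow> real) \<Rightarrow> complex" where
  "xi_hat n q x = complex_of_real ((1 + (2 * pi) ^ 2 * qnorm2_sq n q) powr (-1/2)) * xi n q x"

definition dom_D :: "nat \<Rightarrow> (nat \<Rightarrow> real) set" where
  "dom_D n = (\<Pi>\<^sub>E i\<in>{..<n}. {0<..<1})"

definition leb_n :: "nat \<Rightarrow> (nat \<Rightarrow> real) measure" where
  "leb_n n = completion (\<Pi>\<^sub>M i\<in>{..<n}. lborel)"

text \<open>i-th partial derivative (exists a.e. for the piecewise smooth functions considered)\<close>
definition pderiv_i :: "nat \<Rightarrow> ((nat \<Rightarrow> real) \<Rightarrow> complex) \<Rightarrow> (nat \<Rightarrow> real) \<Rightarrow> complex" where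
  "pderiv_i i u x = vector_derivative (\<lambda>t. u (x(i := t))) (at (x i))"

definition bil :: "nat \<Rightarrow> real \<Rightarrow> (nat \<Rightarrow> real) \<Rightarrow> real \<Rightarrow>
     ((nat \<Rightarrow> real) \<Rightarrow> complex) \<Rightarrow> ((nat \<Rightarrow> real) \<Rightarrow> complex) \<Rightarrow> complex" where
  "bil n \<eta> \<beta> \<rho> u v = (LINT x : dom_D n | leb_n n.
      complex_of_real \<eta> * (\<Sum>i<n. pderiv_i i u x * cnj (pderiv_i i v x))
    + (\<Sum>i<n. complex_of_real (\<beta> i) * pderiv_i i u x) * cnj (v x)
    + complex_of_real \<rho> * u x * cnj (v x))"

definition mu :: "nat \<Rightarrow> nat \<Rightarrow> nat \<Rightarrow> real \<Rightarrow> (nat \<Rightarrow> real) \<Rightarrow> real \<Rightarrow> (nat \<Rightarrow> int) \<Rightarrow> real" where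
  "mu n l0 L \<eta> \<beta> \<rho> q = (SUP j \<in> J_iso n l0 L. (case j of (l, k, e) \<Rightarrow>
      (cmod (bil n \<eta> \<beta> \<rho> (psi_iso_hat n l k e) (xi_hat n q)))\<^sup>2))"

definition qnorm0 :: "nat \<Rightarrow> (nat \<Rightarrow> int) \<Rightarrow> nat" where
  "qnorm0 n q = card {i. i < n \<and> q i \<noteq> 0}"

definition qnorm_inf :: "nat \<Rightarrow> (nat \<Rightarrow> int) \<Rightarrow> real" where
  "qnorm_inf n q = Max ((\<lambda>i. \<bar>real_of_int (q i)\<bar>) ` {..<n})"

text \<open>|q^|^y for the constant vector y = (p,...,p): product over nonzero entries\<close>
definition qhat_pow :: "nat \<Rightarrow> (nat \<Rightarrow> int) \<Rightarrow> nat \<Rightarrow> real" where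
  "qhat_pow n q p = (\<Prod>i\<in>{i. i < n \<and> q i \<noteq> 0}. \<bar>real_of_int (q i)\<bar> ^ p)"

end

theory Submission
  imports Defs
begin
definition hdr :: "real \<Rightarrow> real" where
  "hdr y = (if -1 < y \<and> y < 0 then 1 else if 0 < y \<and> y < 1 then -1 else 0)"

lemma hat_phi_alt: "hat_phi = (\<lambda>x. max 0 (1 - \<bar>x\<bar>))"
  by (rule ext) (simp add: hat_phi_def)

lemma hat_cont[continuous_intros]: "continuous_on S hat_phi"
  unfolding hat_phi_alt by (intro continuous_intros)

lemma hat_zero: "\<not> (-1 < y \<and> y < 1) \<Longrightarrow> hat_phi y = 0"
  by (auto simp: hat_phi_def)

lemma hat_nonneg: "0 \<le> hat_phi y" by (simp add: hat_phi_def)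
lemma hat_le1: "hat_phi y \<le> 1" by (simp add: hat_phi_def)

lemma hat_deriv:
  assumes "y \<noteq> -1" "y \<noteq> 0" "y \<noteq> 1"
  shows "(hat_phi has_real_derivative hdr y) (at y)"
proof -
  consider "y < -1" | "-1 < y \<and> y < 0" | "0 < y \<and> y < 1" | "1 < y" using assms by linarith
  then show ?thesis
  proof cases
    case 1
    have "((\<lambda>_. 0::real) has_real_derivative 0) (at y)" by (rule DERIV_const)
    then have "(hat_phi has_real_derivative 0) (at y)"
      by (rule has_field_derivative_transform_within_open[where S="{..< -1}"])
         (use 1 in \<open>auto simp: hat_phi_def\<close>)
    then show ?thesis using 1 by (simp add: hdr_def)
  next
    case 2
    have "((\<lambda>x. 1 + x::real) has_real_derivative 1) (at y)"
      by (auto intro!: derivative_eq_intros)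
    then have "(hat_phi has_real_derivative 1) (at y)"
      by (rule has_field_derivative_transform_within_open[where S="{-1<..<0}"])
         (use 2 in \<open>auto simp: hat_phi_def\<close>)
    then show ?thesis using 2 by (simp add: hdr_def)
  next
    case 3
    have "((\<lambda>x. 1 - x::real) has_real_derivative -1) (at y)"
      by (auto intro!: derivative_eq_intros)
    then have "(hat_phi has_real_derivative -1) (at y)"
      by (rule has_field_derivative_transform_within_open[where S="{0<..<1}"])
         (use 3 in \<open>auto simp: hat_phi_def\<close>)
    then show ?thesis using 3 by (simp add: hdr_def)
  next
    case 4
    have "((\<lambda>_. 0::real) has_real_derivative 0) (at y)" by (rule DERIV_const)
    then have "(hat_phi has_real_derivative 0) (at y)"
      by (rule has_field_derivative_transform_within_open[where S="{1<..}"])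
         (use 4 in \<open>auto simp: hat_phi_def\<close>)
    then show ?thesis using 4 by (simp add: hdr_def)
  qed
qed

lemma hdr_meas[measurable]: "hdr \<in> borel_measurable borel"
  unfolding hdr_def by measurable

lemma hdr_bound: "\<bar>hdr y\<bar> \<le> 1" by (simp add: hdr_def)

definition sE :: "nat \<Rightarrow> real" where "sE e = (if e = 0 then 1 else 2)"
definition RE :: "nat \<Rightarrow> int set" where "RE e = (if e = 0 then {0} else {-1,0,1,2,3})"
definition wE :: "nat \<Rightarrow> int \<Rightarrow> real" where
  "wE e r = (if e = 0 then 1 else (if r = -1 then 1/4 else if r = 0 then 1/2 else if r = 1 then -3/2
     else if r = 2 then 1/2 else 1/4))"

definition fe :: "nat \<Rightarrow> real \<Rightarrow> real" where
  "fe e y = (\<Sum>r\<in>RE e. wE e r * hat_phi (sE e * y - of_int r))"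

definition fd :: "nat \<Rightarrow> real \<Rightarrow> real" where
  "fd e y = (\<Sum>r\<in>RE e. wE e r * (hdr (sE e * y - of_int r) * sE e))"

lemma finite_RE[simp]: "finite (RE e)" by (simp add: RE_def)

lemma fe_eq: "(if e = 0 then hat_phi else wav_psi) = fe e"
  by (rule ext) (auto simp: fe_def RE_def wE_def sE_def wav_psi_def)

lemma RE_range: "r \<in> RE e \<Longrightarrow> -1 \<le> r \<and> r \<le> 3"
  by (auto simp: RE_def split: if_splits)

lemma sE_cases: "sE e = 1 \<or> sE e = 2" by (simp add: sE_def)

lemma fe_zero:
  assumes "\<not> (-1 < y \<and> y < 2)" shows "fe e y = 0"
  unfolding fe_def
proof (rule sum.neutral, intro ballI)
  fix r assume r: "r \<in> RE e"
  have "\<not> (-1 < sE e * y - of_int r \<and> sE e * y - of_int r < 1)"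
  proof (cases "e = 0")
    case True then show ?thesis using r assms by (auto simp: RE_def sE_def)
  next
    case False
    have "-1 \<le> real_of_int r" "real_of_int r \<le> 3" using RE_range[OF r] by auto
    then show ?thesis using False assms by (auto simp: sE_def)
  qed
  then show "wE e r * hat_phi (sE e * y - of_int r) = 0" by (simp add: hat_zero)
qed

definition KK :: "real set" where "KK = {-1, -1/2, 0, 1/2, 1, 3/2, 2}"

lemma finite_KK[simp]: "finite KK" by (simp add: KK_def)

lemma fe_deriv:
  assumes "y \<notin> KK"
  shows "(fe e has_real_derivative fd e y) (at y)"
  unfolding fe_def[abs_def] fd_def
proof (rule DERIV_sum)
  fix r assume r: "r \<in> RE e"
  have rr: "-1 \<le> real_of_int r" "real_of_int r \<le> 3" using RE_range[OF r] by auto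
  have "r = -1 \<or> r = 0 \<or> r = 1 \<or> r = 2 \<or> r = 3" using RE_range[OF r] by auto
  then have ne: "sE e * y - of_int r \<noteq> -1 \<and> sE e * y - of_int r \<noteq> 0 \<and> sE e * y - of_int r \<noteq> 1"
    using assms r unfolding KK_def by (cases "e = 0") (auto simp: field_simps sE_def RE_def)
  have "((\<lambda>y. sE e * y - of_int r) has_real_derivative sE e) (at y)"
    by (auto intro!: derivative_eq_intros)
  from DERIV_chain2[OF hat_deriv this] ne
  have "((\<lambda>y. hat_phi (sE e * y - of_int r)) has_real_derivative hdr (sE e * y - of_int r) * sE e) (at y)"
    by auto
  then show "((\<lambda>x. wE e r * hat_phi (sE e * x - of_int r)) has_real_derivative
      wE e r * (hdr (sE e * y - of_int r) * sE e)) (at y)"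
    by (rule DERIV_cmult)
qed

lemma fe_cont[continuous_intros]: "continuous_on S (fe e)"
  unfolding fe_def[abs_def] by (intro continuous_intros continuous_on_compose2[OF hat_cont]) auto

lemma fd_meas[measurable]: "fd e \<in> borel_measurable borel"
  unfolding fd_def[abs_def] by measurable

definition TH :: "nat \<Rightarrow> int \<Rightarrow> nat \<Rightarrow> real \<Rightarrow> real" where
  "TH l k e x = (\<Sum>j\<in>{-1,0,1::int}. 2 powr (real l / 2) * fe e (2 ^ l * (x + of_int j) - of_int k))"

definition THd :: "nat \<Rightarrow> int \<Rightarrow> nat \<Rightarrow> real \<Rightarrow> real" where
  "THd l k e x = (\<Sum>j\<in>{-1,0,1::int}. 2 powr (real l / 2) * (fd e (2 ^ l * (x + of_int j) - of_int k) * 2 ^ l))"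

definition ZZ :: "nat \<Rightarrow> int \<Rightarrow> real set" where
  "ZZ l k = (\<lambda>(j, y). (y + of_int k) / 2 ^ l - of_int j) ` ({-1,0,1::int} \<times> KK)"

lemma finite_ZZ[simp]: "finite (ZZ l k)" by (simp add: ZZ_def)

lemma theta_alt: "theta l k e = periodize (\<lambda>x. 2 powr (real l / 2) * fe e (2 ^ l * x - of_int k))"
  by (simp add: theta_def fe_eq)

lemma fe_shift_zero:
  assumes k: "0 \<le> k" "k < 2 ^ l" and y: "y \<le> -1 \<or> 2 \<le> y"
  shows "fe e (2 ^ l * y - of_int k) = 0"
proof (rule fe_zero)
  have kr: "0 \<le> real_of_int k" "real_of_int k + 1 \<le> 2 ^ l"
  proof -
    show "0 \<le> real_of_int k" using k by simp
    have "k + 1 \<le> 2 ^ l" using k by simp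
    then have "real_of_int (k + 1) \<le> real_of_int (2 ^ l)" by (simp only: of_int_le_iff)
    then show "real_of_int k + 1 \<le> 2 ^ l" by simp
  qed
  have p: "(1::real) \<le> 2 ^ l" by simp
  from y show "\<not> (- 1 < 2 ^ l * y - of_int k \<and> 2 ^ l * y - of_int k < 2)"
  proof
    assume "y \<le> -1"
    then have "2 ^ l * y \<le> 2 ^ l * (-1::real)" by (intro mult_left_mono) auto
    then show ?thesis using kr p by linarith
  next
    assume "2 \<le> y"
    then have "2 ^ l * 2 \<le> 2 ^ l * (y::real)" by (intro mult_left_mono) auto
    then show ?thesis using kr p by linarith
  qed
qed

lemma theta_rep:
  assumes k: "0 \<le> k" "k < 2 ^ l" and x: "0 \<le> x" "x \<le> 1"
  shows "theta l k e x = TH l k e x"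
proof -
  have "theta l k e x = (\<Sum>\<^sub>\<infinity>j\<in>UNIV. 2 powr (real l / 2) * fe e (2 ^ l * (x + of_int j) - of_int k))"
    by (simp add: theta_alt periodize_def)
  also have "\<dots> = (\<Sum>\<^sub>\<infinity>j\<in>{-1,0,1::int}. 2 powr (real l / 2) * fe e (2 ^ l * (x + of_int j) - of_int k))"
  proof (rule infsum_cong_neutral)
    fix j :: int assume "j \<in> UNIV - {-1,0,1}"
    then have "j \<le> -2 \<or> 2 \<le> j" by auto
    then have "x + of_int j \<le> -1 \<or> 2 \<le> x + of_int j"
    proof
      assume "j \<le> -2" then have "real_of_int j \<le> -2" by simp
      then show ?thesis using x by auto
    next
      assume "2 \<le> j" then have "2 \<le> real_of_int j" by simp
      then show ?thesis using x by auto
    qed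
    then show "2 powr (real l / 2) * fe e (2 ^ l * (x + of_int j) - of_int k) = 0"
      using fe_shift_zero[OF k] by simp
  qed auto
  also have "\<dots> = TH l k e x" by (subst infsum_finite) (auto simp: TH_def)
  finally show ?thesis .
qed


lemma theta_per:
  assumes k: "0 \<le> k" "k < 2 ^ l"
  shows "theta l k e 1 = theta l k e 0"
proof -
  have a: "fe e (2 ^ l * (1 + 1) - of_int k) = 0" using fe_shift_zero[OF k, of 2] by simp
  have b: "fe e (2 ^ l * (0 - 1) - of_int k) = 0" using fe_shift_zero[OF k, of "-1"] by simp
  show ?thesis using a b
    by (simp add: theta_rep[OF k] TH_def)
qed

lemma TH_cont[continuous_intros]: "continuous_on S (TH l k e)"
  unfolding TH_def[abs_def]
  by (intro continuous_intros continuous_on_compose2[OF fe_cont[of UNIV]]) auto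

lemma theta_cont: 
  assumes k: "0 \<le> k" "k < 2 ^ l"
  shows "continuous_on {0..1} (theta l k e)"
  using TH_cont by (rule continuous_on_eq) (auto simp: theta_rep[OF k])

lemma TH_deriv:
  assumes "x \<notin> ZZ l k"
  shows "(TH l k e has_real_derivative THd l k e x) (at x)"
  unfolding TH_def[abs_def] THd_def
proof (rule DERIV_sum, rule DERIV_cmult)
  fix j :: int assume j: "j \<in> {-1,0,1}"
  have nk: "2 ^ l * (x + of_int j) - of_int k \<notin> KK"
  proof
    assume "2 ^ l * (x + of_int j) - of_int k \<in> KK"
    then have "x \<in> ZZ l k" unfolding ZZ_def using j
      by (auto intro!: image_eqI[where x="(j, 2 ^ l * (x + of_int j) - of_int k)"] simp: field_simps)
    then show False using assms by simp
  qed
  have "((\<lambda>x. 2 ^ l * (x + of_int j) - of_int k) has_real_derivative 2 ^ l) (at x)"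
    by (auto intro!: derivative_eq_intros)
  from DERIV_chain2[OF fe_deriv[OF nk] this]
  show "((\<lambda>x. fe e (2 ^ l * (x + of_int j) - of_int k)) has_real_derivative
      fd e (2 ^ l * (x + of_int j) - of_int k) * 2 ^ l) (at x)" .
qed

lemma theta_deriv:
  assumes k: "0 \<le> k" "k < 2 ^ l" and x: "0 < x" "x < 1" "x \<notin> ZZ l k"
  shows "(theta l k e has_real_derivative THd l k e x) (at x)"
  using TH_deriv[OF x(3)] 
  by (rule has_field_derivative_transform_within_open[where S="{0<..<1}"])
     (use x in \<open>auto simp: theta_rep[OF k]\<close>)

lemma THd_meas[measurable]: "THd l k e \<in> borel_measurable borel"
  unfolding THd_def[abs_def] by measurable

lemma TH_meas[measurable]: "TH l k e \<in> borel_measurable borel"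
  by (rule borel_measurable_continuous_onI) (rule TH_cont)

lemma fd_bound: "\<bar>fd e y\<bar> \<le> 6"
proof -
  have "\<bar>fd e y\<bar> \<le> (\<Sum>r\<in>RE e. \<bar>wE e r * (hdr (sE e * y - of_int r) * sE e)\<bar>)"
    unfolding fd_def by (rule sum_abs)
  also have "\<dots> \<le> (\<Sum>r\<in>RE e. \<bar>wE e r\<bar> * 2)"
  proof (rule sum_mono)
    fix r assume "r \<in> RE e"
    have "\<bar>hdr (sE e * y - of_int r) * sE e\<bar> \<le> 1 * 2"
      unfolding abs_mult using hdr_bound sE_cases[of e]
      by (intro mult_mono) auto
    then show "\<bar>wE e r * (hdr (sE e * y - of_int r) * sE e)\<bar> \<le> \<bar>wE e r\<bar> * 2"
      by (simp add: abs_mult mult_left_mono)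
  qed
  also have "\<dots> \<le> 6" by (auto simp: RE_def wE_def)
  finally show ?thesis .
qed

lemma fe_bound: "\<bar>fe e y\<bar> \<le> 3"
proof -
  have "\<bar>fe e y\<bar> \<le> (\<Sum>r\<in>RE e. \<bar>wE e r * hat_phi (sE e * y - of_int r)\<bar>)"
    unfolding fe_def by (rule sum_abs)
  also have "\<dots> \<le> (\<Sum>r\<in>RE e. \<bar>wE e r\<bar>)"
  proof (rule sum_mono)
    fix r assume "r \<in> RE e"
    show "\<bar>wE e r * hat_phi (sE e * y - of_int r)\<bar> \<le> \<bar>wE e r\<bar>"
      using hat_nonneg hat_le1 by (simp add: abs_mult mult_left_le)
  qed
  also have "\<dots> \<le> 3" by (auto simp: RE_def wE_def)
  finally show ?thesis .
qed

lemma THd_bound: "\<bar>THd l k e x\<bar> \<le> 18 * 2 powr (real l / 2) * 2 ^ l"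
proof -
  have "\<bar>THd l k e x\<bar> \<le> (\<Sum>j\<in>{-1,0,1::int}. \<bar>2 powr (real l / 2) * (fd e (2 ^ l * (x + of_int j) - of_int k) * 2 ^ l)\<bar>)"
    unfolding THd_def by (rule sum_abs)
  also have "\<dots> \<le> (\<Sum>j\<in>{-1,0,1::int}. 2 powr (real l / 2) * (6 * 2 ^ l))"
    by (intro sum_mono) (auto simp: abs_mult intro!: mult_left_mono mult_right_mono fd_bound)
  also have "\<dots> = 18 * 2 powr (real l / 2) * 2 ^ l" by simp
  finally show ?thesis .
qed

lemma TH_bound: "\<bar>TH l k e x\<bar> \<le> 9 * 2 powr (real l / 2)"
proof -
  have "\<bar>TH l k e x\<bar> \<le> (\<Sum>j\<in>{-1,0,1::int}. \<bar>2 powr (real l / 2) * fe e (2 ^ l * (x + of_int j) - of_int k)\<bar>)"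
    unfolding TH_def by (rule sum_abs)
  also have "\<dots> \<le> (\<Sum>j\<in>{-1,0,1::int}. 2 powr (real l / 2) * 3)"
    by (intro sum_mono) (auto simp: abs_mult intro!: mult_left_mono fe_bound)
  also have "\<dots> = 9 * 2 powr (real l / 2)" by simp
  finally show ?thesis .
qed

definition Ec :: "int \<Rightarrow> real \<Rightarrow> complex" where
  "Ec m t = exp (\<i> * complex_of_real (-2 * pi * of_int m * t))"

definition cm :: "int \<Rightarrow> complex" where
  "cm m = \<i> * complex_of_real (-2 * pi * of_int m)"

lemma Ec_eq: "Ec m t = exp (cm m * complex_of_real t)"
  by (simp add: Ec_def cm_def mult.assoc)

lemma norm_Ec[simp]: "norm (Ec m t) = 1"
  by (simp add: Ec_def)

lemma cm_nz: "m \<noteq> 0 \<Longrightarrow> cm m \<noteq> 0"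
  by (simp add: cm_def)

lemma norm_cm: "norm (cm m) = 2 * pi * \<bar>real_of_int m\<bar>"
  by (simp add: cm_def norm_mult abs_mult)

lemma Ec_cont[continuous_intros]: "continuous_on S (Ec m)"
  unfolding Ec_def[abs_def] by (intro continuous_intros)

lemma Ec_int: "Ec m (t + of_int j) = Ec m t"
proof -
  have "Ec m (t + of_int j) = exp (\<i> * complex_of_real (-2 * pi * of_int m * t) +
          complex_of_real (2 * real_of_int (- m * j) * pi) * \<i>)"
    unfolding Ec_def by (rule arg_cong[where f=exp]) (simp add: algebra_simps)
  also have "\<dots> = Ec m t * exp (complex_of_real (2 * real_of_int (- m * j) * pi) * \<i>)"
    by (simp only: exp_add Ec_def)
  also have "exp (complex_of_real (2 * real_of_int (- m * j) * pi) * \<i>) = 1"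
    by (rule exp_integer_2pi) simp
  finally show ?thesis by simp
qed

lemma Ec_deriv: "(Ec m has_vector_derivative cm m * Ec m t) (at t within S)"
proof -
  have "((\<lambda>z. exp (cm m * z)) has_field_derivative exp (cm m * complex_of_real t) * cm m) (at (complex_of_real t))"
    by (auto intro!: derivative_eq_intros)
  from has_vector_derivative_real_field[OF this]
  show ?thesis unfolding Ec_eq[abs_def] by (simp add: mult.commute)
qed

lemma Ec_meas[measurable]: "Ec m \<in> borel_measurable borel"
  by (rule borel_measurable_continuous_onI) (rule Ec_cont)

lemma ftc_cx:
  fixes F F' :: "complex \<Rightarrow> complex"
  assumes "p \<le> q" "\<And>z. (F has_field_derivative F' z) (at z)"
  shows "((\<lambda>y. F' (complex_of_real y)) has_integral (F (of_real q) - F (of_real p))) {p..q}"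
  by (rule fundamental_theorem_of_calculus[OF assms(1)])
     (intro has_vector_derivative_real_field assms(2))

lemma hat_int_exact:
  assumes a: "0 < a" and m: "m \<noteq> 0"
  shows "((\<lambda>y. complex_of_real (hat_phi (a * y - b)) * Ec m y) has_integral
     (complex_of_real a / (cm m)\<^sup>2 * (Ec m ((b - 1) / a) - 2 * Ec m (b / a) + Ec m ((b + 1) / a))))
     {(b - 1) / a .. (b + 1) / a}"
proof -
  define c where "c = cm m"
  have c: "c \<noteq> 0" using cm_nz[OF m] by (simp add: c_def)
  define A where "A = complex_of_real a"
  define B where "B = complex_of_real b"
  have A: "A \<noteq> 0" using a by (simp add: A_def)
  define F1 where "F1 z = (1 + A * z - B) * exp (c * z) / c - A * exp (c * z) / c\<^sup>2" for z
  define F2 where "F2 z = (1 - (A * z - B)) * exp (c * z) / c + A * exp (c * z) / c\<^sup>2" for z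
  have d1: "(F1 has_field_derivative (1 + A * z - B) * exp (c * z)) (at z)" for z
    unfolding F1_def[abs_def] using c
    by (auto intro!: derivative_eq_intros simp: field_simps power2_eq_square)
  have d2: "(F2 has_field_derivative (1 - (A * z - B)) * exp (c * z)) (at z)" for z
    unfolding F2_def[abs_def] using c
    by (auto intro!: derivative_eq_intros simp: field_simps power2_eq_square)
  have le1: "(b - 1) / a \<le> b / a" "b / a \<le> (b + 1) / a" using a by (auto simp: field_simps)
  have i1: "((\<lambda>y. complex_of_real (hat_phi (a * y - b)) * Ec m y) has_integral
        (F1 (of_real (b / a)) - F1 (of_real ((b - 1) / a)))) {(b - 1) / a .. b / a}"
  proof (rule has_integral_eq[OF _ ftc_cx[OF le1(1) d1]])
    fix y assume y: "y \<in> {(b - 1) / a .. b / a}"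
    then have "-1 \<le> a * y - b" "a * y - b \<le> 0" using a by (auto simp: field_simps)
    then have "hat_phi (a * y - b) = 1 + a * y - b" by (simp add: hat_phi_def)
    then show "(1 + A * complex_of_real y - B) * exp (c * complex_of_real y) =
        complex_of_real (hat_phi (a * y - b)) * Ec m y"
      by (simp add: A_def B_def c_def Ec_eq)
  qed
  have i2: "((\<lambda>y. complex_of_real (hat_phi (a * y - b)) * Ec m y) has_integral
        (F2 (of_real ((b + 1) / a)) - F2 (of_real (b / a)))) {b / a .. (b + 1) / a}"
  proof (rule has_integral_eq[OF _ ftc_cx[OF le1(2) d2]])
    fix y assume y: "y \<in> {b / a .. (b + 1) / a}"
    then have "0 \<le> a * y - b" "a * y - b \<le> 1" using a by (auto simp: field_simps)
    then have "hat_phi (a * y - b) = 1 - (a * y - b)" by (simp add: hat_phi_def)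
    then show "(1 - (A * complex_of_real y - B)) * exp (c * complex_of_real y) =
        complex_of_real (hat_phi (a * y - b)) * Ec m y"
      by (simp add: A_def B_def c_def Ec_eq)
  qed
  from has_integral_combine[OF le1 i1 i2]
  have "((\<lambda>y. complex_of_real (hat_phi (a * y - b)) * Ec m y) has_integral
      (F1 (of_real (b / a)) - F1 (of_real ((b - 1) / a)) + (F2 (of_real ((b + 1) / a)) - F2 (of_real (b / a)))))
      {(b - 1) / a .. (b + 1) / a}" .
  moreover have "F1 (of_real (b / a)) - F1 (of_real ((b - 1) / a)) + (F2 (of_real ((b + 1) / a)) - F2 (of_real (b / a)))
     = complex_of_real a / (cm m)\<^sup>2 * (Ec m ((b - 1) / a) - 2 * Ec m (b / a) + Ec m ((b + 1) / a))"
  proof -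
    have ab: "A * complex_of_real (b / a) = B"
    proof -
      have h: "a * (b / a) = b" using a by simp
      show ?thesis unfolding A_def B_def of_real_mult[symmetric] h ..
    qed
    have e1: "1 + A * complex_of_real (b / a) - B = 1"
      using ab by simp
    have e0: "1 + A * complex_of_real ((b - 1) / a) - B = 0"
      using a by (simp add: A_def B_def field_simps flip: of_real_mult)
    have e2: "1 - (A * complex_of_real ((b + 1) / a) - B) = 0"
      using a by (simp add: A_def B_def field_simps flip: of_real_mult)
    have e3: "1 - (A * complex_of_real (b / a) - B) = 1"
      using ab by simp
    show ?thesis
      unfolding F1_def F2_def e0 e1 e2 e3 using c
      by (simp add: Ec_eq c_def A_def field_simps power2_eq_square)
  qed
  ultimately show ?thesis by simp
qed

lemma hat_int_real:
  assumes a: "0 < a"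
  shows "((\<lambda>y. hat_phi (a * y - b)) has_integral 1 / a) {(b - 1) / a .. (b + 1) / a}"
proof -
  have le1: "(b - 1) / a \<le> b / a" "b / a \<le> (b + 1) / a" using a by (auto simp: field_simps)
  define G1 where "G1 y = (1 + a * y - b)\<^sup>2 / (2 * a)" for y
  define G2 where "G2 y = - (1 - (a * y - b))\<^sup>2 / (2 * a)" for y
  have i1: "((\<lambda>y. hat_phi (a * y - b)) has_integral (G1 (b / a) - G1 ((b - 1) / a))) {(b - 1) / a .. b / a}"
  proof (rule has_integral_eq[OF _ fundamental_theorem_of_calculus[OF le1(1)]])
    fix y assume y: "y \<in> {(b - 1) / a .. b / a}"
    then have "-1 \<le> a * y - b" "a * y - b \<le> 0" using a by (auto simp: field_simps)
    then show "1 + a * y - b = hat_phi (a * y - b)" by (simp add: hat_phi_def)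
  next
    fix y :: real
    show "(G1 has_vector_derivative 1 + a * y - b) (at y within {(b - 1) / a..b / a})"
      unfolding G1_def[abs_def] has_real_derivative_iff_has_vector_derivative[symmetric] using a
      by (auto intro!: derivative_eq_intros simp: field_simps power2_eq_square)
  qed
  have i2: "((\<lambda>y. hat_phi (a * y - b)) has_integral (G2 ((b + 1) / a) - G2 (b / a))) {b / a .. (b + 1) / a}"
  proof (rule has_integral_eq[OF _ fundamental_theorem_of_calculus[OF le1(2)]])
    fix y assume y: "y \<in> {b / a .. (b + 1) / a}"
    then have "0 \<le> a * y - b" "a * y - b \<le> 1" using a by (auto simp: field_simps)
    then show "1 - (a * y - b) = hat_phi (a * y - b)" by (simp add: hat_phi_def)
  next
    fix y :: real
    show "(G2 has_vector_derivative 1 - (a * y - b)) (at y within {b / a..(b + 1) / a})"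
      unfolding G2_def[abs_def] has_real_derivative_iff_has_vector_derivative[symmetric] using a
      by (auto intro!: derivative_eq_intros simp: field_simps power2_eq_square)
  qed
  from has_integral_combine[OF le1 i1 i2] show ?thesis
    using a by (simp add: G1_def G2_def field_simps power2_eq_square)
qed

lemma hat_int:
  assumes a: "0 < a"
  shows "\<exists>I. ((\<lambda>y. complex_of_real (hat_phi (a * y - b)) * Ec m y) has_integral I) {(b - 1) / a .. (b + 1) / a}
     \<and> norm I \<le> 1 / a \<and> (m \<noteq> 0 \<longrightarrow> norm I \<le> a / (pi\<^sup>2 * (real_of_int m)\<^sup>2))"
proof -
  let ?H = "\<lambda>y. complex_of_real (hat_phi (a * y - b)) * Ec m y"
  let ?S = "{(b - 1) / a .. (b + 1) / a}"
  have int: "?H integrable_on ?S"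
    by (intro integrable_continuous_interval continuous_intros continuous_on_compose2[OF hat_cont[of UNIV]]) auto
  have hr: "((\<lambda>y. hat_phi (a * y - b)) has_integral 1 / a) ?S" by (rule hat_int_real[OF a])
  have b1: "norm (integral ?S ?H) \<le> 1 / a"
  proof -
    have "norm (integral ?S ?H) \<le> integral ?S (\<lambda>y. hat_phi (a * y - b))"
      using int hr by (intro integral_norm_bound_integral) (auto simp: norm_mult hat_nonneg)
    then show ?thesis using integral_unique[OF hr] by simp
  qed
  have b2: "norm (integral ?S ?H) \<le> a / (pi\<^sup>2 * (real_of_int m)\<^sup>2)" if m: "m \<noteq> 0"
  proof -
    have eq: "integral ?S ?H = complex_of_real a / (cm m)\<^sup>2 * (Ec m ((b - 1) / a) - 2 * Ec m (b / a) + Ec m ((b + 1) / a))"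
      by (rule integral_unique[OF hat_int_exact[OF a m]])
    have nX: "norm (Ec m ((b - 1) / a) - 2 * Ec m (b / a) + Ec m ((b + 1) / a)) \<le> 4"
    proof -
      have "norm (Ec m ((b - 1) / a) - 2 * Ec m (b / a) + Ec m ((b + 1) / a)) \<le>
          norm (Ec m ((b - 1) / a) - 2 * Ec m (b / a)) + norm (Ec m ((b + 1) / a))"
        by (rule norm_triangle_ineq)
      also have "norm (Ec m ((b - 1) / a) - 2 * Ec m (b / a)) \<le> norm (Ec m ((b - 1) / a)) + norm (2 * Ec m (b / a))"
        by (rule norm_triangle_ineq4)
      finally show ?thesis by (simp add: norm_mult)
    qed
    have nc: "(norm (cm m))\<^sup>2 = 4 * pi\<^sup>2 * (real_of_int m)\<^sup>2"
      by (simp add: norm_cm power_mult_distrib)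
    have pos: "0 < (norm (cm m))\<^sup>2" using cm_nz[OF m] by simp
    have "norm (integral ?S ?H) = a / (norm (cm m))\<^sup>2 * norm (Ec m ((b - 1) / a) - 2 * Ec m (b / a) + Ec m ((b + 1) / a))"
      unfolding eq using a by (simp add: norm_mult norm_divide norm_power)
    also have "\<dots> \<le> a / (norm (cm m))\<^sup>2 * 4"
      using a pos nX by (intro mult_left_mono) auto
    also have "\<dots> = a / (pi\<^sup>2 * (real_of_int m)\<^sup>2)" unfolding nc by simp
    finally show ?thesis .
  qed
  show ?thesis using int b1 b2 by (intro exI[of _ "integral ?S ?H"]) auto
qed

lemma shift01:
  assumes "(f has_integral I) {of_int j .. of_int j + 1}"
  shows "((\<lambda>x. f (x + of_int j)) has_integral I) {0..1::real}"
  using has_integral_affinity_iff[of 1 f "of_int j" I "of_int j" "of_int j + 1"] assms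
  by (simp add: add.commute)

lemma hat_int_per:
  assumes a: "0 < a" and s1: "-1 \<le> (b - 1) / a" and s2: "(b + 1) / a \<le> 2"
  shows "\<exists>I. ((\<lambda>x. \<Sum>j\<in>{-1,0,1::int}. complex_of_real (hat_phi (a * (x + of_int j) - b)) * Ec m x) has_integral I) {0..1}
     \<and> norm I \<le> 1 / a \<and> (m \<noteq> 0 \<longrightarrow> norm I \<le> a / (pi\<^sup>2 * (real_of_int m)\<^sup>2))"
proof -
  let ?H = "\<lambda>y. complex_of_real (hat_phi (a * y - b)) * Ec m y"
  obtain I where I: "(?H has_integral I) {(b - 1) / a .. (b + 1) / a}" "norm I \<le> 1 / a"
    "m \<noteq> 0 \<longrightarrow> norm I \<le> a / (pi\<^sup>2 * (real_of_int m)\<^sup>2)"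
    using hat_int[OF a, of b m] by blast
  have big: "(?H has_integral I) {-1 .. 2}"
  proof (rule has_integral_on_superset[OF I(1)])
    fix y assume "y \<notin> {(b - 1) / a .. (b + 1) / a}"
    then have "\<not> (-1 < a * y - b \<and> a * y - b < 1)" using a by (auto simp: field_simps)
    then show "?H y = 0" by (simp add: hat_zero)
  qed (use s1 s2 in auto)
  have int: "?H integrable_on {-1..2}" using big by blast
  have sub: "?H integrable_on {c..d}" if "-1 \<le> c" "d \<le> 2" for c d
    by (rule integrable_subinterval_real[OF int]) (use that in auto)
  have c1: "integral {-1..0} ?H + integral {0..2} ?H = integral {-1..2} ?H"
    by (rule Henstock_Kurzweil_Integration.integral_combine) (use int in auto)
  have c2: "integral {0..1} ?H + integral {1..2} ?H = integral {0..2} ?H"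
    by (rule Henstock_Kurzweil_Integration.integral_combine) (use sub[of 0 2] in auto)
  have sumI: "integral {-1..0} ?H + integral {0..1} ?H + integral {1..2} ?H = I"
    unfolding integral_unique[OF big, symmetric] c1[symmetric] c2[symmetric] by (simp only: add.assoc)
  have sh: "((\<lambda>x. ?H (x + of_int j)) has_integral integral {of_int j .. of_int j + 1} ?H) {0..1}"
    if "j \<in> {-1,0,1}" for j :: int
    using that by (intro shift01 integrable_integral sub) auto
  have "((\<lambda>x. \<Sum>j\<in>{-1,0,1::int}. ?H (x + of_int j)) has_integral
          (\<Sum>j\<in>{-1,0,1::int}. integral {of_int j .. of_int j + 1} ?H)) {0..1}"
    by (rule has_integral_sum) (use sh in auto)
  moreover have "(\<Sum>j\<in>{-1,0,1::int}. integral {of_int j .. of_int j + 1} ?H) = I"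
    using sumI by (simp add: add.assoc)
  moreover have "(\<lambda>x. \<Sum>j\<in>{-1,0,1::int}. ?H (x + of_int j)) =
      (\<lambda>x. \<Sum>j\<in>{-1,0,1::int}. complex_of_real (hat_phi (a * (x + of_int j) - b)) * Ec m x)"
    by (simp add: Ec_int)
  ultimately show ?thesis using I by auto
qed

lemma k_real:
  assumes "0 \<le> k" "k < (2::int) ^ l"
  shows "0 \<le> real_of_int k" "real_of_int k + 1 \<le> 2 ^ l"
proof -
  show "0 \<le> real_of_int k" using assms by simp
  have "k + 1 \<le> 2 ^ l" using assms by simp
  then have "real_of_int (k + 1) \<le> real_of_int (2 ^ l)" by (simp only: of_int_le_iff)
  then show "real_of_int k + 1 \<le> 2 ^ l" by simp
qed

lemma theta_expand:
  assumes k: "0 \<le> k" "k < 2 ^ l" and x: "0 \<le> x" "x \<le> 1"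
  shows "complex_of_real (theta l k e x) * Ec m x =
    (\<Sum>r\<in>RE e. complex_of_real (2 powr (real l / 2) * wE e r) *
       (\<Sum>j\<in>{-1,0,1::int}. complex_of_real (hat_phi (sE e * 2 ^ l * (x + of_int j) - (sE e * of_int k + of_int r))) * Ec m x))"
proof -
  have arg: "sE e * (2 ^ l * (x + of_int j) - of_int k) - of_int r = sE e * 2 ^ l * (x + of_int j) - (sE e * of_int k + of_int r)"
    for j r :: int by (simp add: algebra_simps)
  have "complex_of_real (theta l k e x) * Ec m x =
     (\<Sum>j\<in>{-1,0,1::int}. \<Sum>r\<in>RE e. complex_of_real (2 powr (real l / 2) * wE e r) *
       (complex_of_real (hat_phi (sE e * 2 ^ l * (x + of_int j) - (sE e * of_int k + of_int r))) * Ec m x))"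
    unfolding theta_rep[OF k x] TH_def fe_def arg of_real_sum of_real_mult sum_distrib_left sum_distrib_right
    by (intro sum.cong refl) (simp add: mult_ac)
  also have "\<dots> = (\<Sum>r\<in>RE e. \<Sum>j\<in>{-1,0,1::int}. complex_of_real (2 powr (real l / 2) * wE e r) *
       (complex_of_real (hat_phi (sE e * 2 ^ l * (x + of_int j) - (sE e * of_int k + of_int r))) * Ec m x))"
    by (rule sum.swap)
  finally show ?thesis by (simp only: sum_distrib_left)
qed

lemma sum_abs_wE: "(\<Sum>r\<in>RE e. \<bar>wE e r\<bar>) = (if e = 0 then 1 else 3)"
  by (simp add: RE_def wE_def)

lemma theta_fourier:
  assumes k: "0 \<le> k" "k < 2 ^ l"
  shows "\<exists>C. ((\<lambda>x. complex_of_real (theta l k e x) * Ec m x) has_integral C) {0..1}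
     \<and> norm C \<le> 2 * 2 powr (real l / 2) / 2 ^ l
     \<and> (m \<noteq> 0 \<longrightarrow> norm C \<le> 2 * 2 powr (real l / 2) * 2 ^ l / (real_of_int m)\<^sup>2)"
proof -
  note kr = k_real[OF k]
  define a where "a = sE e * 2 ^ l"
  have a: "0 < a" using sE_cases[of e] by (auto simp: a_def)
  let ?P = "\<lambda>r I. ((\<lambda>x. \<Sum>j\<in>{-1,0,1::int}. complex_of_real (hat_phi (a * (x + of_int j) - (sE e * of_int k + of_int r))) * Ec m x) has_integral I) {0..1}
     \<and> norm I \<le> 1 / a \<and> (m \<noteq> 0 \<longrightarrow> norm I \<le> a / (pi\<^sup>2 * (real_of_int m)\<^sup>2))"
  have "\<forall>r\<in>RE e. \<exists>I. ?P r I"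
  proof
    fix r assume r: "r \<in> RE e"
    have p: "(1::real) \<le> 2 ^ l" by simp
    have c1: "-1 \<le> (sE e * of_int k + of_int r - 1) / a" and c2: "(sE e * of_int k + of_int r + 1) / a \<le> 2"
    proof -
      have "- a \<le> sE e * of_int k + of_int r - 1 \<and> sE e * of_int k + of_int r + 1 \<le> 2 * a"
      proof (cases "e = 0")
        case True
        then have "r = 0" "sE e = 1" using r by (auto simp: RE_def sE_def)
        then show ?thesis using kr p True by (simp add: a_def)
      next
        case False
        then have "sE e = 2" by (simp add: sE_def)
        moreover have "-1 \<le> real_of_int r" "real_of_int r \<le> 3" using RE_range[OF r] by auto
        ultimately show ?thesis using kr p by (simp add: a_def)
      qed
      then show "-1 \<le> (sE e * of_int k + of_int r - 1) / a" "(sE e * of_int k + of_int r + 1) / a \<le> 2"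
        using a by (auto simp: field_simps)
    qed
    show "\<exists>I. ?P r I" using hat_int_per[OF a c1 c2, of m] by simp
  qed
  from bchoice[OF this] obtain I where I0: "\<forall>r\<in>RE e. ?P r (I r)" ..
  have I: "?P r (I r)" if "r \<in> RE e" for r using I0 that by blast
  define C where "C = (\<Sum>r\<in>RE e. complex_of_real (2 powr (real l / 2) * wE e r) * I r)"
  have hi: "((\<lambda>x. \<Sum>r\<in>RE e. complex_of_real (2 powr (real l / 2) * wE e r) *
       (\<Sum>j\<in>{-1,0,1::int}. complex_of_real (hat_phi (a * (x + of_int j) - (sE e * of_int k + of_int r))) * Ec m x)) has_integral C) {0..1}"
    unfolding C_def by (intro has_integral_sum has_integral_mult_right) (use I in auto)
  have HI: "((\<lambda>x. complex_of_real (theta l k e x) * Ec m x) has_integral C) {0..1}"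
    by (rule has_integral_eq[OF _ hi]) (simp add: theta_expand[OF k] a_def)
  have nC: "norm C \<le> 2 powr (real l / 2) * (if e = 0 then 1 else 3) * B"
    if B: "\<And>r. r \<in> RE e \<Longrightarrow> norm (I r) \<le> B" for B
  proof -
    have "norm C \<le> (\<Sum>r\<in>RE e. norm (complex_of_real (2 powr (real l / 2) * wE e r) * I r))"
      unfolding C_def by (rule norm_sum)
    also have "\<dots> \<le> (\<Sum>r\<in>RE e. 2 powr (real l / 2) * \<bar>wE e r\<bar> * B)"
      by (intro sum_mono) (auto simp: norm_mult abs_mult intro!: mult_left_mono B)
    also have "\<dots> = 2 powr (real l / 2) * (\<Sum>r\<in>RE e. \<bar>wE e r\<bar>) * B"
      by (simp add: sum_distrib_left sum_distrib_right mult_ac)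
    finally show ?thesis by (simp add: sum_abs_wE)
  qed
  have b1: "norm C \<le> 2 * 2 powr (real l / 2) / 2 ^ l"
  proof -
    have "norm C \<le> 2 powr (real l / 2) * (if e = 0 then 1 else 3) * (1 / a)"
      using I by (intro nC) auto
    also have "\<dots> \<le> 2 * 2 powr (real l / 2) / 2 ^ l"
      by (cases "e = 0") (auto simp: a_def sE_def field_simps)
    finally show ?thesis .
  qed
  have b2: "norm C \<le> 2 * 2 powr (real l / 2) * 2 ^ l / (real_of_int m)\<^sup>2" if m: "m \<noteq> 0"
  proof -
    have "norm C \<le> 2 powr (real l / 2) * (if e = 0 then 1 else 3) * (a / (pi\<^sup>2 * (real_of_int m)\<^sup>2))"
      using I m by (intro nC) auto
    also have "\<dots> \<le> 2 * 2 powr (real l / 2) * 2 ^ l / (real_of_int m)\<^sup>2"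
    proof -
      have "3 * 3 \<le> pi * pi" using pi_gt3 by (intro mult_mono) auto
      then have pi2: "3 \<le> pi\<^sup>2" by (simp add: power2_eq_square)
      have m2: "0 < (real_of_int m)\<^sup>2" using m by simp
      have "(if e = 0 then 1 else 3) * sE e \<le> 2 * pi\<^sup>2"
        using pi2 by (auto simp: sE_def)
      then have "(if e = 0 then 1 else 3) * sE e / pi\<^sup>2 \<le> 2"
        using pi2 by (simp add: divide_le_eq)
      then have "2 powr (real l / 2) * 2 ^ l / (real_of_int m)\<^sup>2 * ((if e = 0 then 1 else 3) * sE e / pi\<^sup>2)
          \<le> 2 powr (real l / 2) * 2 ^ l / (real_of_int m)\<^sup>2 * 2"
        using m2 by (intro mult_left_mono) auto
      then show ?thesis by (simp add: a_def field_simps)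
    qed
    finally show ?thesis .
  qed
  show ?thesis using HI b1 b2 by blast
qed

definition cc :: "nat \<Rightarrow> int \<Rightarrow> nat \<Rightarrow> int \<Rightarrow> complex" where
  "cc l k e m = integral {0..1} (\<lambda>x. complex_of_real (theta l k e x) * Ec m x)"

lemma cc_props:
  assumes k: "0 \<le> k" "k < 2 ^ l"
  shows "((\<lambda>x. complex_of_real (theta l k e x) * Ec m x) has_integral cc l k e m) {0..1}"
    "norm (cc l k e m) \<le> 2 * 2 powr (real l / 2) / 2 ^ l"
    "m \<noteq> 0 \<Longrightarrow> norm (cc l k e m) \<le> 2 * 2 powr (real l / 2) * 2 ^ l / (real_of_int m)\<^sup>2"
proof -
  obtain C where C: "((\<lambda>x. complex_of_real (theta l k e x) * Ec m x) has_integral C) {0..1}"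
     "norm C \<le> 2 * 2 powr (real l / 2) / 2 ^ l"
     "m \<noteq> 0 \<longrightarrow> norm C \<le> 2 * 2 powr (real l / 2) * 2 ^ l / (real_of_int m)\<^sup>2"
    using theta_fourier[OF k, of e m] by blast
  have "cc l k e m = C" unfolding cc_def by (rule integral_unique[OF C(1)])
  then show "((\<lambda>x. complex_of_real (theta l k e x) * Ec m x) has_integral cc l k e m) {0..1}"
    "norm (cc l k e m) \<le> 2 * 2 powr (real l / 2) / 2 ^ l"
    "m \<noteq> 0 \<Longrightarrow> norm (cc l k e m) \<le> 2 * 2 powr (real l / 2) * 2 ^ l / (real_of_int m)\<^sup>2"
    using C by auto
qed

lemma theta_ibp:
  assumes k: "0 \<le> k" "k < 2 ^ l"
  shows "((\<lambda>x. complex_of_real (THd l k e x) * Ec m x) has_integral (- cm m * cc l k e m)) {0..1}"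
proof -
  let ?f = "\<lambda>x. complex_of_real (theta l k e x) * Ec m x"
  let ?f' = "\<lambda>x. complex_of_real (theta l k e x) * (cm m * Ec m x) + complex_of_real (THd l k e x) * Ec m x"
  have "(?f' has_integral (?f 1 - ?f 0)) {0..1}"
  proof (rule fundamental_theorem_of_calculus_interior_strong[OF finite_ZZ[of l k]])
    fix x assume x: "x \<in> {0<..<1} - ZZ l k"
    have d1: "((\<lambda>x. complex_of_real (theta l k e x)) has_vector_derivative complex_of_real (THd l k e x)) (at x)"
      using x by (intro has_vector_derivative_of_real theta_deriv[OF k]) auto
    show "(?f has_vector_derivative ?f' x) (at x)"
      using has_vector_derivative_mult[OF d1 Ec_deriv] by simp
  next
    have "continuous_on {0..1} (theta l k e)" by (rule theta_cont[OF k])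
    then show "continuous_on {0..1} ?f"
      by (intro continuous_intros) auto
  qed simp
  moreover have "?f 1 - ?f 0 = 0"
    using theta_per[OF k, of e] Ec_int[of m 0 1] by simp
  ultimately have A: "(?f' has_integral 0) {0..1}" by simp
  have B: "((\<lambda>x. cm m * ?f x) has_integral cm m * cc l k e m) {0..1}"
    by (rule has_integral_mult_right[OF cc_props(1)[OF k]])
  have "((\<lambda>x. ?f' x - cm m * ?f x) has_integral 0 - cm m * cc l k e m) {0..1}"
    by (rule has_integral_diff[OF A B])
  then show ?thesis by (simp add: algebra_simps)
qed

lemma lborel_HK:
  fixes f :: "real \<Rightarrow> complex"
  assumes hi: "(f has_integral I) {0..1}"
    and meas: "(\<lambda>x. indicator {0<..<1} x *\<^sub>R f x) \<in> borel_measurable borel"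
    and bnd: "\<And>x. x \<in> {0<..<1} \<Longrightarrow> norm (f x) \<le> B"
  shows "integrable lborel (\<lambda>x. indicator {0<..<1} x *\<^sub>R f x)"
    "integral\<^sup>L lborel (\<lambda>x. indicator {0<..<1} x *\<^sub>R f x) = I"
proof -
  have ib: "integrable lborel (\<lambda>x. indicator {0<..<1::real} x * \<bar>B\<bar>)"
    by (intro integrable_mult_left integrable_real_indicator) auto
  show int: "integrable lborel (\<lambda>x. indicator {0<..<1} x *\<^sub>R f x)"
  proof (rule Bochner_Integration.integrable_bound[OF ib])
    show "(\<lambda>x. indicator {0<..<1} x *\<^sub>R f x) \<in> borel_measurable lborel" using meas by simp
    show "AE x in lborel. norm (indicator {0<..<1} x *\<^sub>R f x) \<le> norm (indicator {0<..<1::real} x * \<bar>B\<bar>)"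
    proof (rule AE_I2)
      fix x show "norm (indicator {0<..<1} x *\<^sub>R f x) \<le> norm (indicator {0<..<1::real} x * \<bar>B\<bar>)"
        using bnd[of x] by (auto simp: indicator_def)
    qed
  qed
  have h1: "((\<lambda>x. indicator {0<..<1} x *\<^sub>R f x) has_integral integral\<^sup>L lborel (\<lambda>x. indicator {0<..<1} x *\<^sub>R f x)) UNIV"
    by (rule has_integral_integral_lborel[OF int])
  have "(f has_integral I) {0<..<1}"
    using hi has_integral_open_interval[of f I 0 "1::real"] by simp
  then have h2: "((\<lambda>x. indicator {0<..<1} x *\<^sub>R f x) has_integral I) UNIV"
  proof -
    have eq: "(\<lambda>x. indicator {0<..<1} x *\<^sub>R f x) = (\<lambda>x. if x \<in> {0<..<1} then f x else 0)"
      by (auto simp: indicator_def fun_eq_iff)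
    show ?thesis unfolding eq has_integral_restrict_UNIV by fact
  qed
  show "integral\<^sup>L lborel (\<lambda>x. indicator {0<..<1} x *\<^sub>R f x) = I"
    using has_integral_unique[OF h1 h2] .
qed

definition fT :: "nat \<Rightarrow> int \<Rightarrow> nat \<Rightarrow> int \<Rightarrow> real \<Rightarrow> complex" where
  "fT l k e m t = indicator {0<..<1} t *\<^sub>R (complex_of_real (theta l k e t) * Ec m t)"

definition fD :: "nat \<Rightarrow> int \<Rightarrow> nat \<Rightarrow> int \<Rightarrow> real \<Rightarrow> complex" where
  "fD l k e m t = indicator {0<..<1} t *\<^sub>R (complex_of_real (THd l k e t) * Ec m t)"

lemma fT_alt:
  assumes k: "0 \<le> k" "k < 2 ^ l"
  shows "fT l k e m = (\<lambda>t. indicator {0<..<1} t *\<^sub>R (complex_of_real (TH l k e t) * Ec m t))"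
  by (rule ext) (auto simp: fT_def indicator_def theta_rep[OF k])

lemma fT_meas:
  assumes k: "0 \<le> k" "k < 2 ^ l"
  shows "fT l k e m \<in> borel_measurable borel"
  unfolding fT_alt[OF k] by measurable

lemma fD_meas[measurable]: "fD l k e m \<in> borel_measurable borel"
  unfolding fD_def[abs_def] by measurable

lemma fT_props:
  assumes k: "0 \<le> k" "k < 2 ^ l"
  shows "integrable lborel (fT l k e m)" "integral\<^sup>L lborel (fT l k e m) = cc l k e m"
proof -
  have b: "norm (complex_of_real (theta l k e x) * Ec m x) \<le> 9 * 2 powr (real l / 2)" if "x \<in> {0<..<1}" for x
    using that TH_bound[of l k e x] by (simp add: norm_mult theta_rep[OF k])
  note L = lborel_HK[OF cc_props(1)[OF k] _ b, folded fT_def[abs_def]]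
  show "integrable lborel (fT l k e m)" "integral\<^sup>L lborel (fT l k e m) = cc l k e m"
    using L fT_meas[OF k] unfolding fT_def[abs_def] by auto
qed

lemma fD_props:
  assumes k: "0 \<le> k" "k < 2 ^ l"
  shows "integrable lborel (fD l k e m)" "integral\<^sup>L lborel (fD l k e m) = - cm m * cc l k e m"
proof -
  have b: "norm (complex_of_real (THd l k e x) * Ec m x) \<le> 18 * 2 powr (real l / 2) * 2 ^ l" if "x \<in> {0<..<1}" for x
    using THd_bound[of l k e x] by (simp add: norm_mult)
  note L = lborel_HK[OF theta_ibp[OF k] _ b]
  show "integrable lborel (fD l k e m)" "integral\<^sup>L lborel (fD l k e m) = - cm m * cc l k e m"
    using L fD_meas unfolding fD_def[abs_def] by auto
qed

definition NN :: "nat \<Rightarrow> (nat \<Rightarrow> int) \<Rightarrow> real" where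
  "NN n q = (1 + (2 * pi) ^ 2 * qnorm2_sq n q) powr (-1/2)"

lemma pd_psi:
  assumes i: "i < n" and k: "0 \<le> k i" "k i < 2 ^ l" and x: "0 < x i" "x i < 1" "x i \<notin> ZZ l (k i)"
  shows "pderiv_i i (psi_iso_hat n l k e) x =
    complex_of_real (2 powr - real l * (THd l (k i) (e i) (x i) * (\<Prod>j\<in>{..<n} - {i}. theta l (k j) (e j) (x j))))"
proof -
  define P where "P = (\<Prod>j\<in>{..<n} - {i}. theta l (k j) (e j) (x j))"
  have eq: "(\<lambda>t. psi_iso_hat n l k e (x(i := t))) = (\<lambda>t. complex_of_real (2 powr - real l * (theta l (k i) (e i) t * P)))"
  proof
    fix t
    have "(\<Prod>j<n. theta l (k j) (e j) ((x(i := t)) j)) = theta l (k i) (e i) t * (\<Prod>j\<in>{..<n} - {i}. theta l (k j) (e j) ((x(i := t)) j))"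
      using i by (subst prod.remove[of _ i]) auto
    also have "(\<Prod>j\<in>{..<n} - {i}. theta l (k j) (e j) ((x(i := t)) j)) = P"
      unfolding P_def by (intro prod.cong) auto
    finally show "psi_iso_hat n l k e (x(i := t)) = complex_of_real (2 powr - real l * (theta l (k i) (e i) t * P))"
      by (simp add: psi_iso_hat_def psi_iso_def)
  qed
  have d: "((\<lambda>t. 2 powr - real l * (theta l (k i) (e i) t * P)) has_real_derivative
      2 powr - real l * (THd l (k i) (e i) (x i) * P)) (at (x i))"
    by (intro DERIV_cmult DERIV_cmult_right theta_deriv k x)
  show ?thesis unfolding pderiv_i_def eq P_def[symmetric]
    by (rule vector_derivative_at[OF has_vector_derivative_of_real[OF d]])
qed

lemma pd_xi:
  assumes i: "i < n"
  shows "pderiv_i i (xi_hat n q) x = (2 * pi * \<i> * of_int (q i)) * xi_hat n q x"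
proof -
  define R where "R = (\<Sum>j\<in>{..<n} - {i}. real_of_int (q j) * x j)"
  define F where "F z = complex_of_real (NN n q) * exp (2 * pi * \<i> * (of_int (q i) * z + complex_of_real R))" for z
  have sumeq: "(\<Sum>j<n. real_of_int (q j) * (x(i := t)) j) = real_of_int (q i) * t + R" for t
  proof -
    have "(\<Sum>j<n. real_of_int (q j) * (x(i := t)) j) = real_of_int (q i) * t + (\<Sum>j\<in>{..<n} - {i}. real_of_int (q j) * (x(i := t)) j)"
      using i by (subst sum.remove[of _ i]) auto
    also have "(\<Sum>j\<in>{..<n} - {i}. real_of_int (q j) * (x(i := t)) j) = R"
      unfolding R_def by (intro sum.cong) auto
    finally show ?thesis .
  qed
  have eq: "(\<lambda>t. xi_hat n q (x(i := t))) = (\<lambda>t. F (complex_of_real t))"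
    unfolding xi_hat_def xi_def sumeq F_def NN_def by (rule ext) simp
  have xeq: "F (complex_of_real (x i)) = xi_hat n q x"
  proof -
    have "x(i := x i) = x" by simp
    then show ?thesis using sumeq[of "x i"] unfolding xi_hat_def xi_def F_def NN_def by simp
  qed
  have d: "(F has_field_derivative F (complex_of_real (x i)) * (2 * pi * \<i> * of_int (q i))) (at (complex_of_real (x i)))"
    unfolding F_def[abs_def] by (auto intro!: derivative_eq_intros simp: algebra_simps)
  show ?thesis unfolding pderiv_i_def eq
    using vector_derivative_at[OF has_vector_derivative_real_field[OF d]] xeq by (simp add: mult.commute)
qed

lemma cnj_xi_hat:
  "cnj (xi_hat n q x) = complex_of_real (NN n q) * (\<Prod>j<n. Ec (q j) (x j))"
proof -
  have "cnj (xi_hat n q x) = complex_of_real (NN n q) *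
      exp (\<Sum>j<n. \<i> * complex_of_real (-2 * pi * of_int (q j) * x j))"
  proof -
    have "cnj (2 * pi * \<i> * complex_of_real (\<Sum>i<n. real_of_int (q i) * x i)) =
        (\<Sum>j<n. \<i> * complex_of_real (-2 * pi * of_int (q j) * x j))"
      by (simp add: sum_distrib_left of_real_sum algebra_simps flip: sum_negf)
    then show ?thesis by (simp add: xi_hat_def xi_def NN_def exp_cnj flip: exp_of_real)
  qed
  also have "\<dots> = complex_of_real (NN n q) * (\<Prod>j<n. Ec (q j) (x j))"
    by (simp add: exp_sum Ec_def)
  finally show ?thesis .
qed

lemma psi_hat_prod:
  "psi_iso_hat n l k e x = complex_of_real (2 powr - real l) * (\<Prod>j<n. complex_of_real (theta l (k j) (e j) (x j)))"
  by (simp add: psi_iso_hat_def psi_iso_def)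

definition AA :: "nat \<Rightarrow> nat \<Rightarrow> (nat \<Rightarrow> int) \<Rightarrow> real \<Rightarrow> (nat \<Rightarrow> real) \<Rightarrow> nat \<Rightarrow> complex" where
  "AA n l q \<eta> \<beta> i = complex_of_real (2 powr - real l * NN n q) *
     (complex_of_real \<eta> * cnj (2 * pi * \<i> * of_int (q i)) + complex_of_real (\<beta> i))"

definition GG :: "nat \<Rightarrow> nat \<Rightarrow> (nat \<Rightarrow> int) \<Rightarrow> (nat \<Rightarrow> nat) \<Rightarrow> (nat \<Rightarrow> int) \<Rightarrow> real \<Rightarrow> (nat \<Rightarrow> real) \<Rightarrow> real \<Rightarrow> (nat \<Rightarrow> real) \<Rightarrow> complex" where
  "GG n l k e q \<eta> \<beta> \<rho> x =
    (\<Sum>i<n. AA n l q \<eta> \<beta> i * (\<Prod>j<n. (if j = i then fD l (k j) (e j) (q j) else fT l (k j) (e j) (q j)) (x j)))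
    + complex_of_real (2 powr - real l * NN n q * \<rho>) * (\<Prod>j<n. fT l (k j) (e j) (q j) (x j))"

definition FF :: "nat \<Rightarrow> nat \<Rightarrow> (nat \<Rightarrow> int) \<Rightarrow> (nat \<Rightarrow> nat) \<Rightarrow> (nat \<Rightarrow> int) \<Rightarrow> real \<Rightarrow> (nat \<Rightarrow> real) \<Rightarrow> real \<Rightarrow> (nat \<Rightarrow> real) \<Rightarrow> complex" where
  "FF n l k e q \<eta> \<beta> \<rho> x =
      complex_of_real \<eta> * (\<Sum>i<n. pderiv_i i (psi_iso_hat n l k e) x * cnj (pderiv_i i (xi_hat n q) x))
    + (\<Sum>i<n. complex_of_real (\<beta> i) * pderiv_i i (psi_iso_hat n l k e) x) * cnj (xi_hat n q x)
    + complex_of_real \<rho> * psi_iso_hat n l k e x * cnj (xi_hat n q x)"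

lemma bil_FF: "bil n \<eta> \<beta> \<rho> (psi_iso_hat n l k e) (xi_hat n q) =
   integral\<^sup>L (leb_n n) (\<lambda>x. indicator (dom_D n) x *\<^sub>R FF n l k e q \<eta> \<beta> \<rho> x)"
  by (simp add: bil_def FF_def set_lebesgue_integral_def)

lemma integrand_eq:
  assumes k: "\<And>i. i < n \<Longrightarrow> 0 \<le> k i \<and> k i < 2 ^ l"
    and good: "\<And>i. i < n \<Longrightarrow> x i \<notin> ZZ l (k i)"
    and ext: "x \<in> extensional {..<n}"
  shows "indicator (dom_D n) x *\<^sub>R FF n l k e q \<eta> \<beta> \<rho> x = GG n l k e q \<eta> \<beta> \<rho> x"
proof (cases "\<forall>j<n. 0 < x j \<and> x j < 1")
  case False
  then obtain j0 where j0: "j0 < n" "\<not> (0 < x j0 \<and> x j0 < 1)" by auto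
  have nD: "x \<notin> dom_D n" using j0 by (auto simp: dom_D_def PiE_def Pi_def)
  have z1: "fT l (k j0) (e j0) (q j0) (x j0) = 0" "fD l (k j0) (e j0) (q j0) (x j0) = 0"
    using j0 by (auto simp: fT_def fD_def indicator_def)
  have p1: "(\<Prod>j<n. fT l (k j) (e j) (q j) (x j)) = 0"
    using j0 z1 by (intro prod_zero) auto
  have p2: "(\<Prod>j<n. (if j = i then fD l (k j) (e j) (q j) else fT l (k j) (e j) (q j)) (x j)) = 0" for i
    using j0 z1 by (intro prod_zero) (auto intro!: bexI[of _ j0])
  show ?thesis using nD by (simp add: GG_def p1 p2)
next
  case True
  define T where "T j = complex_of_real (theta l (k j) (e j) (x j)) * Ec (q j) (x j)" for j
  define D where "D j = complex_of_real (THd l (k j) (e j) (x j)) * Ec (q j) (x j)" for j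
  define c where "c i = 2 * pi * \<i> * of_int (q i)" for i
  have inD: "x \<in> dom_D n" using True ext by (auto simp: dom_D_def PiE_def Pi_def)
  have fTeq: "fT l (k j) (e j) (q j) (x j) = T j" if "j < n" for j
    using True that by (simp add: fT_def T_def)
  have fDeq: "fD l (k j) (e j) (q j) (x j) = D j" if "j < n" for j
    using True that by (simp add: fD_def D_def)
  have key1: "pderiv_i i (psi_iso_hat n l k e) x * cnj (xi_hat n q x) =
      complex_of_real (2 powr - real l * NN n q) * (\<Prod>j<n. if j = i then D j else T j)" if i: "i < n" for i
  proof -
    have "(\<Prod>j<n. if j = i then D j else T j) = D i * (\<Prod>j\<in>{..<n} - {i}. T j)"
      using i by (subst prod.remove[of _ i]) (auto intro!: prod.cong)
    also have "(\<Prod>j\<in>{..<n} - {i}. T j) = complex_of_real (\<Prod>j\<in>{..<n} - {i}. theta l (k j) (e j) (x j)) *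
        (\<Prod>j\<in>{..<n} - {i}. Ec (q j) (x j))"
      by (simp add: T_def prod.distrib of_real_prod)
    finally have a: "(\<Prod>j<n. if j = i then D j else T j) = D i * (complex_of_real (\<Prod>j\<in>{..<n} - {i}. theta l (k j) (e j) (x j)) *
        (\<Prod>j\<in>{..<n} - {i}. Ec (q j) (x j)))" .
    have b: "(\<Prod>j<n. Ec (q j) (x j)) = Ec (q i) (x i) * (\<Prod>j\<in>{..<n} - {i}. Ec (q j) (x j))"
      using i by (subst prod.remove[of _ i]) auto
    have pd: "pderiv_i i (psi_iso_hat n l k e) x =
      complex_of_real (2 powr - real l * (THd l (k i) (e i) (x i) * (\<Prod>j\<in>{..<n} - {i}. theta l (k j) (e j) (x j))))"
      by (rule pd_psi) (use i k True good in auto)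
    show ?thesis
      unfolding pd cnj_xi_hat a b
      by (simp add: D_def mult_ac)
  qed
  have key2: "psi_iso_hat n l k e x * cnj (xi_hat n q x) = complex_of_real (2 powr - real l * NN n q) * (\<Prod>j<n. T j)"
    by (simp add: psi_hat_prod cnj_xi_hat T_def prod.distrib mult_ac)
  have "FF n l k e q \<eta> \<beta> \<rho> x =
      (\<Sum>i<n. (complex_of_real \<eta> * cnj (c i) + complex_of_real (\<beta> i)) * (pderiv_i i (psi_iso_hat n l k e) x * cnj (xi_hat n q x)))
      + complex_of_real \<rho> * (psi_iso_hat n l k e x * cnj (xi_hat n q x))"
  proof -
    have s1: "(\<Sum>i<n. pderiv_i i (psi_iso_hat n l k e) x * cnj (pderiv_i i (xi_hat n q) x)) =
        (\<Sum>i<n. cnj (c i) * (pderiv_i i (psi_iso_hat n l k e) x * cnj (xi_hat n q x)))"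
      by (rule sum.cong) (simp_all add: pd_xi c_def mult_ac)
    show ?thesis
      unfolding FF_def s1
      by (simp add: sum_distrib_left sum_distrib_right algebra_simps sum.distrib)
  qed
  also have "\<dots> = GG n l k e q \<eta> \<beta> \<rho> x"
    unfolding GG_def key2
    by (intro arg_cong2[where f="(+)"] sum.cong refl)
       (auto simp: key1 AA_def c_def fTeq fDeq intro!: prod.cong)
  finally show ?thesis using inD by simp
qed

lemma completion_meas_AE:
  fixes f g :: "'a \<Rightarrow> 'b::topological_space"
  assumes g: "g \<in> borel_measurable M" and N: "N \<in> null_sets M"
    and eq: "\<And>x. x \<in> space M \<Longrightarrow> x \<notin> N \<Longrightarrow> f x = g x"
  shows "f \<in> borel_measurable (completion M)"
proof (rule measurableI)
  fix x assume "x \<in> space (completion M)" then show "f x \<in> space borel" by simp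
next
  fix A :: "'b set" assume A: "A \<in> sets borel"
  have NM: "N \<subseteq> space M" using N by (auto dest: sets.sets_into_space)
  have eqs: "f -` A \<inter> space (completion M) = (g -` A \<inter> space M - N) \<union> (f -` A \<inter> space M \<inter> N)"
    using eq by auto
  have S: "g -` A \<inter> space M - N \<in> sets M"
    using measurable_sets[OF g A] N by auto
  show "f -` A \<inter> space (completion M) \<in> sets (completion M)"
    unfolding eqs by (rule sets_completionI[OF refl _ N S]) auto
qed

lemma prod_if_single:
  fixes g :: "nat \<Rightarrow> 'a::comm_monoid_mult"
  assumes "finite A" "i \<in> A"
  shows "(\<Prod>j\<in>A. if j = i then a * g j else g j) = a * (\<Prod>j\<in>A. g j)"
proof -
  have "(\<Prod>j\<in>A. if j = i then a * g j else g j) = (a * g i) * (\<Prod>j\<in>A - {i}. if j = i then a * g j else g j)"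
    using assms by (subst prod.remove[of _ i]) auto
  also have "(\<Prod>j\<in>A - {i}. if j = i then a * g j else g j) = (\<Prod>j\<in>A - {i}. g j)"
    by (intro prod.cong) auto
  also have "a * g i * (\<Prod>j\<in>A - {i}. g j) = a * (\<Prod>j\<in>A. g j)"
    using assms by (subst (2) prod.remove[of _ i]) (auto simp: mult_ac)
  finally show ?thesis .
qed

lemma bil_formula:
  assumes k: "\<And>i. i < n \<Longrightarrow> 0 \<le> k i \<and> k i < 2 ^ l"
  shows "bil n \<eta> \<beta> \<rho> (psi_iso_hat n l k e) (xi_hat n q) =
    ((\<Sum>i<n. AA n l q \<eta> \<beta> i * (- cm (q i))) + complex_of_real (2 powr - real l * NN n q * \<rho>)) *
    (\<Prod>j<n. cc l (k j) (e j) (q j))"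
proof -
  define M where "M = Pi\<^sub>M {..<n} (\<lambda>_::nat. lborel::real measure)"
  interpret PS: product_sigma_finite "\<lambda>_::nat. lborel::real measure"
    by (simp add: product_sigma_finite_def sigma_finite_lborel)
  define N0 where "N0 = (\<Union>i\<in>{..<n}. {x \<in> space M. x i \<in> ZZ l (k i)})"
  have N0: "N0 \<in> null_sets M"
    unfolding N0_def
  proof (rule null_sets_UN')
    fix i assume i: "i \<in> {..<n}"
    have eqs: "{x \<in> space M. x i \<in> ZZ l (k i)} = (\<Pi>\<^sub>E j\<in>{..<n}. if j = i then ZZ l (k i) else UNIV)"
      using i by (auto simp: M_def space_PiM PiE_def Pi_def split: if_splits)
    have fin: "ZZ l (k i) \<in> sets lborel"
      by (simp add: finite_imp_closed)
    have "emeasure M (\<Pi>\<^sub>E j\<in>{..<n}. if j = i then ZZ l (k i) else UNIV) =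
        (\<Prod>j<n. emeasure lborel (if j = i then ZZ l (k i) else UNIV))"
      unfolding M_def using fin by (intro PS.emeasure_PiM) auto
    also have "\<dots> = 0"
      using i by (intro prod_zero) (auto intro!: bexI[of _ i] emeasure_lborel_countable countable_finite)
    finally have e0: "emeasure M (\<Pi>\<^sub>E j\<in>{..<n}. if j = i then ZZ l (k i) else UNIV) = 0" .
    have "(\<Pi>\<^sub>E j\<in>{..<n}. if j = i then ZZ l (k i) else UNIV) \<in> sets M"
      unfolding M_def using fin by (intro sets_PiM_I_finite) auto
    then show "{x \<in> space M. x i \<in> ZZ l (k i)} \<in> null_sets M"
      unfolding eqs using e0 by (simp add: null_sets_def)
  qed simp
  have mT: "(\<lambda>x. fT l (k j) (e j) (q j) (x j)) \<in> borel_measurable M" if "j < n" for j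
  proof -
    have c: "(\<lambda>x. x j) \<in> M \<rightarrow>\<^sub>M lborel" unfolding M_def by (rule measurable_component_singleton) (use that in simp)
    have f: "fT l (k j) (e j) (q j) \<in> borel_measurable lborel" using fT_meas[of "k j" l "e j" "q j"] k[OF that] by simp
    show ?thesis using measurable_compose[OF c f] .
  qed
  have mD: "(\<lambda>x. fD l (k j) (e j) (q j) (x j)) \<in> borel_measurable M" if "j < n" for j
  proof -
    have c: "(\<lambda>x. x j) \<in> M \<rightarrow>\<^sub>M lborel" unfolding M_def by (rule measurable_component_singleton) (use that in simp)
    have f: "fD l (k j) (e j) (q j) \<in> borel_measurable lborel" using fD_meas[of l "k j" "e j" "q j"] by simp
    show ?thesis using measurable_compose[OF c f] .
  qed
  have mG: "GG n l k e q \<eta> \<beta> \<rho> \<in> borel_measurable M"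
    unfolding GG_def[abs_def]
    by (intro borel_measurable_add borel_measurable_sum borel_measurable_times borel_measurable_const
        borel_measurable_prod) (auto intro: mT mD)
  have ae: "\<And>x. x \<in> space M \<Longrightarrow> x \<notin> N0 \<Longrightarrow>
      indicator (dom_D n) x *\<^sub>R FF n l k e q \<eta> \<beta> \<rho> x = GG n l k e q \<eta> \<beta> \<rho> x"
    by (rule integrand_eq) (auto simp: N0_def M_def space_PiM k PiE_def)
  have mF: "(\<lambda>x. indicator (dom_D n) x *\<^sub>R FF n l k e q \<eta> \<beta> \<rho> x) \<in> borel_measurable (completion M)"
    by (rule completion_meas_AE[OF mG N0 ae])
  have AE: "AE x in completion M. indicator (dom_D n) x *\<^sub>R FF n l k e q \<eta> \<beta> \<rho> x = GG n l k e q \<eta> \<beta> \<rho> x"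
    by (intro AE_completion AE_I'[OF N0]) (auto dest: ae)
  have "bil n \<eta> \<beta> \<rho> (psi_iso_hat n l k e) (xi_hat n q) = integral\<^sup>L (completion M) (GG n l k e q \<eta> \<beta> \<rho>)"
    unfolding bil_FF leb_n_def M_def[symmetric]
    by (rule integral_cong_AE[OF mF measurable_completion[OF mG] AE])
  also have "\<dots> = integral\<^sup>L M (GG n l k e q \<eta> \<beta> \<rho>)"
    by (rule integral_completion[OF mG])
  also have "\<dots> = ((\<Sum>i<n. AA n l q \<eta> \<beta> i * (- cm (q i))) + complex_of_real (2 powr - real l * NN n q * \<rho>)) *
    (\<Prod>j<n. cc l (k j) (e j) (q j))"
  proof -
    define fi where "fi i j = (if j = i then fD l (k j) (e j) (q j) else fT l (k j) (e j) (q j))" for i j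
    have intfi: "integrable lborel (fi i j)" if "j < n" for i j
      using fT_props(1) fD_props(1) k[OF that] by (auto simp: fi_def)
    have intT: "integrable lborel (fT l (k j) (e j) (q j))" if "j < n" for j
      using fT_props(1) k[OF that] by auto
    have I1: "integrable M (\<lambda>x. \<Prod>j<n. fi i j (x j))" for i
      unfolding M_def by (rule PS.product_integrable_prod) (auto intro: intfi)
    have I2: "integrable M (\<lambda>x. \<Prod>j<n. fT l (k j) (e j) (q j) (x j))"
      unfolding M_def by (rule PS.product_integrable_prod) (auto intro: intT)
    have E1: "integral\<^sup>L M (\<lambda>x. \<Prod>j<n. fi i j (x j)) = - cm (q i) * (\<Prod>j<n. cc l (k j) (e j) (q j))" if i: "i < n" for i
    proof -
      have "integral\<^sup>L M (\<lambda>x. \<Prod>j<n. fi i j (x j)) = (\<Prod>j<n. integral\<^sup>L lborel (fi i j))"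
        unfolding M_def by (rule PS.product_integral_prod) (auto intro: intfi)
      also have "\<dots> = (\<Prod>j<n. if j = i then - cm (q i) * cc l (k j) (e j) (q j) else cc l (k j) (e j) (q j))"
        by (intro prod.cong refl) (auto simp: fi_def fT_props(2) fD_props(2) k)
      also have "\<dots> = - cm (q i) * (\<Prod>j<n. cc l (k j) (e j) (q j))"
        using i by (intro prod_if_single) auto
      finally show ?thesis .
    qed
    have E2: "integral\<^sup>L M (\<lambda>x. \<Prod>j<n. fT l (k j) (e j) (q j) (x j)) = (\<Prod>j<n. cc l (k j) (e j) (q j))"
    proof -
      have "integral\<^sup>L M (\<lambda>x. \<Prod>j<n. fT l (k j) (e j) (q j) (x j)) = (\<Prod>j<n. integral\<^sup>L lborel (fT l (k j) (e j) (q j)))"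
        unfolding M_def by (rule PS.product_integral_prod) (auto intro: intT)
      also have "\<dots> = (\<Prod>j<n. cc l (k j) (e j) (q j))"
        by (intro prod.cong refl) (auto simp: fT_props(2) k)
      finally show ?thesis .
    qed
    have G: "GG n l k e q \<eta> \<beta> \<rho> = (\<lambda>x. (\<Sum>i<n. AA n l q \<eta> \<beta> i * (\<Prod>j<n. fi i j (x j)))
      + complex_of_real (2 powr - real l * NN n q * \<rho>) * (\<Prod>j<n. fT l (k j) (e j) (q j) (x j)))"
      by (rule ext) (simp add: GG_def fi_def)
    have "integral\<^sup>L M (GG n l k e q \<eta> \<beta> \<rho>) =
       (\<Sum>i<n. AA n l q \<eta> \<beta> i * integral\<^sup>L M (\<lambda>x. \<Prod>j<n. fi i j (x j)))
       + complex_of_real (2 powr - real l * NN n q * \<rho>) * integral\<^sup>L M (\<lambda>x. \<Prod>j<n. fT l (k j) (e j) (q j) (x j))"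
      unfolding G using I1 I2
      by (simp add: integral_add integral_sum integrable_sum integrable_mult_right)
    also have "\<dots> = (\<Sum>i<n. AA n l q \<eta> \<beta> i * (- cm (q i) * (\<Prod>j<n. cc l (k j) (e j) (q j))))
       + complex_of_real (2 powr - real l * NN n q * \<rho>) * (\<Prod>j<n. cc l (k j) (e j) (q j))"
      by (simp add: E1 E2)
    also have "\<dots> = ((\<Sum>i<n. AA n l q \<eta> \<beta> i * (- cm (q i))) + complex_of_real (2 powr - real l * NN n q * \<rho>)) * (\<Prod>j<n. cc l (k j) (e j) (q j))"
      by (simp only: sum_distrib_right distrib_right mult.assoc)
    finally show ?thesis .
  qed
  finally show ?thesis .
qed

lemma bil_norm:
  assumes k: "\<And>i. i < n \<Longrightarrow> 0 \<le> k i \<and> k i < 2 ^ l"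
  shows "(cmod (bil n \<eta> \<beta> \<rho> (psi_iso_hat n l k e) (xi_hat n q)))\<^sup>2 =
    (2 powr - real l * NN n q)\<^sup>2 *
    ((\<eta> * 4 * pi\<^sup>2 * qnorm2_sq n q + \<rho>)\<^sup>2 + (2 * pi * (\<Sum>i<n. \<beta> i * of_int (q i)))\<^sup>2) *
    (\<Prod>j<n. (cmod (cc l (k j) (e j) (q j)))\<^sup>2)"
proof -
  have t: "AA n l q \<eta> \<beta> i * (- cm (q i)) = complex_of_real (2 powr - real l * NN n q) *
      Complex (\<eta> * 4 * pi\<^sup>2 * (of_int (q i))\<^sup>2) (2 * pi * \<beta> i * of_int (q i))" for i
    by (simp add: AA_def cm_def complex_eq_iff power2_eq_square algebra_simps)
  have s: "(\<Sum>i<n. AA n l q \<eta> \<beta> i * (- cm (q i))) + complex_of_real (2 powr - real l * NN n q * \<rho>) =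
     complex_of_real (2 powr - real l * NN n q) *
     Complex (\<eta> * 4 * pi\<^sup>2 * qnorm2_sq n q + \<rho>) (2 * pi * (\<Sum>i<n. \<beta> i * of_int (q i)))"
    unfolding t sum_distrib_left[symmetric]
    by (simp add: complex_eq_iff Re_sum Im_sum qnorm2_sq_def sum_distrib_left algebra_simps)
  have b: "bil n \<eta> \<beta> \<rho> (psi_iso_hat n l k e) (xi_hat n q) = complex_of_real (2 powr - real l * NN n q) *
     Complex (\<eta> * 4 * pi\<^sup>2 * qnorm2_sq n q + \<rho>) (2 * pi * (\<Sum>i<n. \<beta> i * of_int (q i))) *
     (\<Prod>j<n. cc l (k j) (e j) (q j))"
    using bil_formula[OF k, where \<eta>=\<eta> and \<beta>=\<beta> and \<rho>=\<rho> and e=e and q=q] s by simp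
  show ?thesis
    unfolding b
    by (simp add: norm_mult prod_norm[symmetric] power_mult_distrib cmod_power2 prod_power_distrib)
qed

lemma pow2_powr: "((2::real) ^ l) ^ j = 2 powr (real l * real j)"
proof -
  have "((2::real) ^ l) ^ j = 2 ^ (l * j)" by (simp add: power_mult)
  also have "\<dots> = 2 powr (real (l * j))" by (subst powr_realpow) auto
  also have "\<dots> = 2 powr (real l * real j)" by (simp only: of_nat_mult)
  finally show ?thesis .
qed

lemma sq_powr_half: "(2 powr (real l / 2))\<^sup>2 = (2::real) ^ l"
proof -
  have "(2 powr (real l / 2))\<^sup>2 = (2::real) powr (real 2 * (real l / 2))" by (subst powr_power) auto
  also have "\<dots> = 2 powr real l" by simp
  also have "\<dots> = 2 ^ l" by (simp add: powr_realpow)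
  finally show ?thesis .
qed

lemma u_bound1:
  assumes k: "0 \<le> k" "k < 2 ^ l"
  shows "(cmod (cc l k e m))\<^sup>2 \<le> 4 / 2 ^ l"
proof -
  have "(cmod (cc l k e m))\<^sup>2 \<le> (2 * 2 powr (real l / 2) / 2 ^ l)\<^sup>2"
    by (rule power_mono[OF cc_props(2)[OF k]]) simp
  also have "\<dots> = 4 * (2 powr (real l / 2))\<^sup>2 / ((2::real) ^ l)\<^sup>2"
    by (simp add: power_divide power_mult_distrib)
  also have "\<dots> = 4 / 2 ^ l" unfolding sq_powr_half by (simp add: power2_eq_square)
  finally show ?thesis .
qed

lemma u_bound2:
  assumes k: "0 \<le> k" "k < 2 ^ l" and m: "m \<noteq> 0"
  shows "(cmod (cc l k e m))\<^sup>2 \<le> 4 * (2 ^ l) ^ 3 / (real_of_int m) ^ 4"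
proof -
  have "(cmod (cc l k e m))\<^sup>2 \<le> (2 * 2 powr (real l / 2) * 2 ^ l / (real_of_int m)\<^sup>2)\<^sup>2"
    by (rule power_mono[OF cc_props(3)[OF k m]]) simp
  also have "\<dots> = 4 * (2 powr (real l / 2))\<^sup>2 * ((2::real) ^ l)\<^sup>2 / (real_of_int m) ^ 4"
    by (simp add: power_divide power_mult_distrib flip: power_mult)
  also have "\<dots> = 4 * (2 ^ l) ^ 3 / (real_of_int m) ^ 4" unfolding sq_powr_half
    by (simp add: power2_eq_square power3_eq_cube)
  finally show ?thesis .
qed

lemma NN_sq: "(NN n q)\<^sup>2 = 1 / (1 + 4 * pi\<^sup>2 * qnorm2_sq n q)"
proof -
  have pos: "0 < 1 + (2 * pi) ^ 2 * qnorm2_sq n q"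
    by (intro add_pos_nonneg mult_nonneg_nonneg) (auto simp: qnorm2_sq_def intro!: sum_nonneg)
  have "(NN n q)\<^sup>2 = (1 + (2 * pi) ^ 2 * qnorm2_sq n q) powr (real 2 * (-1/2))"
    unfolding NN_def using pos by (subst powr_power) auto
  also have "\<dots> = 1 / (1 + (2 * pi) ^ 2 * qnorm2_sq n q)"
    using pos by (simp add: powr_minus_divide)
  finally show ?thesis by (simp add: power_mult_distrib)
qed

lemma NY_bound:
  fixes Q B C \<eta> \<rho> :: real
  assumes Q: "1 \<le> Q" and B: "0 \<le> B" and C: "C\<^sup>2 \<le> B * Q"
  shows "1 / (1 + 4 * pi\<^sup>2 * Q) * ((\<eta> * 4 * pi\<^sup>2 * Q + \<rho>)\<^sup>2 + (2 * pi * C)\<^sup>2)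
     \<le> 8 * pi\<^sup>2 * Q * (\<eta>\<^sup>2 + B / Q + \<rho>\<^sup>2 / Q\<^sup>2)"
proof -
  define a where "a = pi\<^sup>2"
  have a: "9 \<le> a"
  proof -
    have "3 * 3 \<le> pi * pi" using pi_gt3 by (intro mult_mono) auto
    then show ?thesis by (simp add: a_def power2_eq_square)
  qed
  define D where "D = 1 + 4 * a * Q"
  have aq: "0 \<le> 4 * a * Q" using a Q by simp
  have D: "0 < D" "4 * a * Q \<le> D" unfolding D_def using aq by linarith+
  have num: "(\<eta> * 4 * a * Q + \<rho>)\<^sup>2 + (2 * pi * C)\<^sup>2 \<le> 32 * a\<^sup>2 * (\<eta>\<^sup>2 * Q\<^sup>2 + B * Q + \<rho>\<^sup>2)"
  proof -
    have "(\<eta> * 4 * a * Q + \<rho>)\<^sup>2 \<le> 2 * (\<eta> * 4 * a * Q)\<^sup>2 + 2 * \<rho>\<^sup>2"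
    proof -
      have e: "(\<eta> * 4 * a * Q + \<rho>)\<^sup>2 + (\<eta> * 4 * a * Q - \<rho>)\<^sup>2 = 2 * (\<eta> * 4 * a * Q)\<^sup>2 + 2 * \<rho>\<^sup>2"
        by (simp add: power2_eq_square algebra_simps)
      have "0 \<le> (\<eta> * 4 * a * Q - \<rho>)\<^sup>2" by simp
      then show ?thesis using e by linarith
    qed
    moreover have "(2 * pi * C)\<^sup>2 = 4 * a * C\<^sup>2" by (simp add: a_def power_mult_distrib)
    moreover have "4 * a * C\<^sup>2 \<le> 4 * a * (B * Q)" using C a by (intro mult_left_mono) auto
    moreover have "4 * a * (B * Q) \<le> 32 * a\<^sup>2 * (B * Q)"
    proof -
      have "a * 1 \<le> a * a" using a by (intro mult_left_mono) auto
      then have "4 * a \<le> 32 * a\<^sup>2" using a by (simp add: power2_eq_square)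
      then show ?thesis using B Q by (intro mult_right_mono) auto
    qed
    moreover have "2 * \<rho>\<^sup>2 \<le> 32 * a\<^sup>2 * \<rho>\<^sup>2"
    proof -
      have "a * 1 \<le> a * a" using a by (intro mult_left_mono) auto
      then have "2 \<le> 32 * a\<^sup>2" unfolding power2_eq_square using a by linarith
      then show ?thesis by (intro mult_right_mono) auto
    qed
    moreover have "2 * (\<eta> * 4 * a * Q)\<^sup>2 = 32 * a\<^sup>2 * (\<eta>\<^sup>2 * Q\<^sup>2)"
      by (simp add: power_mult_distrib)
    moreover have "32 * a\<^sup>2 * (\<eta>\<^sup>2 * Q\<^sup>2 + B * Q + \<rho>\<^sup>2) = 32 * a\<^sup>2 * (\<eta>\<^sup>2 * Q\<^sup>2) + 32 * a\<^sup>2 * (B * Q) + 32 * a\<^sup>2 * \<rho>\<^sup>2"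
      by (simp add: distrib_left)
    ultimately show ?thesis by linarith
  qed
  have W: "8 * a * Q * (\<eta>\<^sup>2 + B / Q + \<rho>\<^sup>2 / Q\<^sup>2) = 8 * a * (\<eta>\<^sup>2 * Q\<^sup>2 + B * Q + \<rho>\<^sup>2) / Q"
    using Q by (simp add: field_simps power2_eq_square)
  have nn: "0 \<le> \<eta>\<^sup>2 * Q\<^sup>2 + B * Q + \<rho>\<^sup>2" using B Q by auto
  have "1 / D * ((\<eta> * 4 * a * Q + \<rho>)\<^sup>2 + (2 * pi * C)\<^sup>2) \<le> 1 / D * (32 * a\<^sup>2 * (\<eta>\<^sup>2 * Q\<^sup>2 + B * Q + \<rho>\<^sup>2))"
    using D num by (intro mult_left_mono) auto
  also have "\<dots> = 8 * a * (\<eta>\<^sup>2 * Q\<^sup>2 + B * Q + \<rho>\<^sup>2) / Q * (4 * a * Q / D)"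
    using Q D by (simp add: field_simps power2_eq_square)
  also have "\<dots> \<le> 8 * a * (\<eta>\<^sup>2 * Q\<^sup>2 + B * Q + \<rho>\<^sup>2) / Q * 1"
    using D a Q nn by (intro mult_left_mono) (auto simp: divide_le_eq)
  finally show ?thesis unfolding W[symmetric] by (simp add: a_def D_def mult.assoc)
qed

lemma prod_split:
  fixes f :: "nat \<Rightarrow> real"
  shows "(\<Prod>j<n. if q j \<noteq> 0 then f j else c) = (\<Prod>j\<in>{i. i < n \<and> q i \<noteq> 0}. f j) * c ^ (n - qnorm0 n q)"
proof -
  have "(\<Prod>j<n. if q j \<noteq> 0 then f j else c) = prod f ({..<n} \<inter> {x. q x \<noteq> 0}) * prod (\<lambda>_. c) ({..<n} \<inter> - {x. q x \<noteq> 0})"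
    by (rule prod.If_cases) simp
  also have "{..<n} \<inter> {x. q x \<noteq> 0} = {i. i < n \<and> q i \<noteq> 0}" by auto
  also have "{..<n} \<inter> - {x. q x \<noteq> 0} = {..<n} - {i. i < n \<and> q i \<noteq> 0}" by auto
  also have "prod (\<lambda>_. c) ({..<n} - {i. i < n \<and> q i \<noteq> 0}) = c ^ (n - qnorm0 n q)"
  proof -
    have "card ({..<n} - {i. i < n \<and> q i \<noteq> 0}) = card {..<n} - card {i. i < n \<and> q i \<noteq> 0}"
      by (rule card_Diff_subset) auto
    then show ?thesis by (simp add: qnorm0_def)
  qed
  finally show ?thesis .
qed

lemma qnorm0_le: "qnorm0 n q \<le> n"
proof -
  have "card {i. i < n \<and> q i \<noteq> 0} \<le> card {..<n}" by (rule card_mono) auto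
  then show ?thesis by (simp add: qnorm0_def)
qed

lemma pow_ratio:
  assumes "s \<le> n"
  shows "((2::real) ^ l) ^ (3 * s) / (((2::real) ^ l) ^ 2 * ((2::real) ^ l) ^ (n - s))
     = 2 powr ((4 * real s - real n - 2) * real l)"
proof -
  have "((2::real) ^ l) ^ (3 * s) / (((2::real) ^ l) ^ 2 * ((2::real) ^ l) ^ (n - s)) =
      2 powr (real l * real (3 * s)) / (2 powr (real l * real 2) * 2 powr (real l * real (n - s)))"
    by (simp only: pow2_powr)
  also have "\<dots> = 2 powr (real l * real (3 * s) - (real l * real 2 + real l * real (n - s)))"
    by (simp add: powr_diff powr_add)
  also have "real l * real (3 * s) - (real l * real 2 + real l * real (n - s)) = (4 * real s - real n - 2) * real l"
    using assms by (simp add: of_nat_diff algebra_simps)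
  finally show ?thesis .
qed

lemma qhat4_eq: "qhat_pow n q 4 = (\<Prod>j\<in>{i. i < n \<and> q i \<noteq> 0}. (real_of_int (q j)) ^ 4)"
  unfolding qhat_pow_def by (intro prod.cong refl) (simp add: power_even_abs_numeral)

lemma qhat_pos: "0 < qhat_pow n q p"
  unfolding qhat_pow_def by (intro prod_pos) auto

lemma B1_bound:
  assumes k: "\<And>i. i < n \<Longrightarrow> 0 \<le> k i \<and> k i < 2 ^ l" and lL: "l \<le> L"
  shows "(2 powr - real l)\<^sup>2 * (\<Prod>j<n. (cmod (cc l (k j) (e j) (q j)))\<^sup>2)
     \<le> 4 ^ n * (1 + 2 powr (2 * (- real n / 2 + 2 * real (qnorm0 n q) - 1) * real L)) / qhat_pow n q 4"
proof -
  define P :: real where "P = 2 ^ l"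
  have P: "0 < P" by (simp add: P_def)
  define s where "s = qnorm0 n q"
  have sn: "s \<le> n" using qnorm0_le by (simp add: s_def)
  define S where "S = {i. i < n \<and> q i \<noteq> 0}"
  have cS: "card S = s" by (simp add: S_def s_def qnorm0_def)
  have finS: "finite S" by (simp add: S_def)
  have "(\<Prod>j<n. (cmod (cc l (k j) (e j) (q j)))\<^sup>2) \<le> (\<Prod>j<n. if q j \<noteq> 0 then 4 * P ^ 3 / (real_of_int (q j)) ^ 4 else 4 / P)"
    by (intro prod_mono) (use k in \<open>auto simp: P_def intro: u_bound1 u_bound2\<close>)
  also have "\<dots> = (\<Prod>j\<in>S. 4 * P ^ 3 / (real_of_int (q j)) ^ 4) * (4 / P) ^ (n - s)"
    unfolding prod_split S_def s_def ..
  also have "(\<Prod>j\<in>S. 4 * P ^ 3 / (real_of_int (q j)) ^ 4) = (4 * P ^ 3) ^ s / qhat_pow n q 4"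
    by (simp add: prod_dividef cS qhat4_eq S_def[symmetric])
  finally have A: "(\<Prod>j<n. (cmod (cc l (k j) (e j) (q j)))\<^sup>2) \<le> (4 * P ^ 3) ^ s / qhat_pow n q 4 * (4 / P) ^ (n - s)" .
  have pw: "(2 powr - real l)\<^sup>2 = 1 / P ^ 2"
    by (simp add: P_def powr_minus_divide powr_realpow power_divide)
  have "(2 powr - real l)\<^sup>2 * (\<Prod>j<n. (cmod (cc l (k j) (e j) (q j)))\<^sup>2) \<le>
      1 / P ^ 2 * ((4 * P ^ 3) ^ s / qhat_pow n q 4 * (4 / P) ^ (n - s))"
    unfolding pw[symmetric] by (intro mult_left_mono A) auto
  also have "\<dots> = 4 ^ n * (P ^ (3 * s) / (P ^ 2 * P ^ (n - s))) / qhat_pow n q 4"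
  proof -
    have "(4::real) ^ s * 4 ^ (n - s) = 4 ^ n" using sn by (simp flip: power_add)
    then show ?thesis using P qhat_pos[of n q 4]
      by (simp add: power_mult_distrib power_divide field_simps flip: power_mult)
  qed
  also have "\<dots> = 4 ^ n * 2 powr ((4 * real s - real n - 2) * real l) / qhat_pow n q 4"
    unfolding P_def pow_ratio[OF sn] ..
  also have "\<dots> \<le> 4 ^ n * (1 + 2 powr (2 * (- real n / 2 + 2 * real s - 1) * real L)) / qhat_pow n q 4"
  proof -
    define c where "c = 4 * real s - real n - 2"
    have ex: "2 * (- real n / 2 + 2 * real s - 1) * real L = c * real L" by (simp add: c_def algebra_simps)
    have "2 powr (c * real l) \<le> 1 + 2 powr (c * real L)"
    proof (cases "0 \<le> c")
      case True
      then have "c * real l \<le> c * real L" using lL by (intro mult_left_mono) auto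
      then have "2 powr (c * real l) \<le> 2 powr (c * real L)" by simp
      then show ?thesis by (smt (verit) powr_ge_zero)
    next
      case False
      then have "c * real l \<le> 0" by (simp add: mult_nonpos_nonneg)
      then have "2 powr (c * real l) \<le> 2 powr 0" by (intro powr_mono) auto
      then show ?thesis by (smt (verit) powr_ge_zero powr_zero_eq_one)
    qed
    then show ?thesis unfolding ex c_def[symmetric] using qhat_pos[of n q 4]
      by (intro divide_right_mono mult_left_mono) auto
  qed
  finally show ?thesis by (simp add: s_def)
qed

lemma div_le_aux:
  fixes x y c :: real
  assumes "0 < x" "x \<le> y" "0 \<le> c"
  shows "c / y \<le> c / x"
  using assms by (intro divide_left_mono) auto

lemma B2_bound:
  assumes k: "\<And>i. i < n \<Longrightarrow> 0 \<le> k i \<and> k i < 2 ^ l" and l0: "l0 \<le> l"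
    and qnz: "\<exists>i<n. q i \<noteq> 0"
  shows "(2 powr - real l)\<^sup>2 * (\<Prod>j<n. (cmod (cc l (k j) (e j) (q j)))\<^sup>2)
     \<le> 4 ^ n * 2 powr (- (real n - real (qnorm0 n q)) * real l0) / ((qnorm_inf n q)\<^sup>2 * qhat_pow n q 1)"
proof -
  define P :: real where "P = 2 ^ l"
  have P: "0 < P" by (simp add: P_def)
  define s where "s = qnorm0 n q"
  have sn: "s \<le> n" using qnorm0_le by (simp add: s_def)
  define S where "S = {i. i < n \<and> q i \<noteq> 0}"
  have cS: "card S = s" by (simp add: S_def s_def qnorm0_def)
  define M where "M = qnorm_inf n q"
  have n0: "{..<n} \<noteq> {}" using qnz by auto
  have "M \<in> (\<lambda>i. \<bar>real_of_int (q i)\<bar>) ` {..<n}" unfolding M_def qnorm_inf_def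
    by (rule Max_in) (use n0 in auto)
  then obtain i0 where i0: "i0 < n" "M = \<bar>real_of_int (q i0)\<bar>" by auto
  have Mge: "\<bar>real_of_int (q j)\<bar> \<le> M" if "j < n" for j
    unfolding M_def qnorm_inf_def using that by (intro Max_ge) auto
  obtain j1 where j1: "j1 < n" "q j1 \<noteq> 0" using qnz by auto
  have "1 \<le> \<bar>real_of_int (q j1)\<bar>" using j1 by linarith
  then have M1: "1 \<le> M" using Mge[OF j1(1)] by linarith
  have qi0: "q i0 \<noteq> 0" using M1 i0 by auto
  define w where "w j = (if q j \<noteq> 0 then 4 / \<bar>real_of_int (q j)\<bar> else 4 * 2 powr (- real l0))" for j
  have ub: "(cmod (cc l (k j) (e j) (q j)))\<^sup>2 \<le> (if j = i0 then P ^ 2 / M ^ 2 else 1) * w j" if j: "j < n" for j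
  proof -
    note kj = k[OF j, THEN conjunct1] k[OF j, THEN conjunct2]
    have u1: "(cmod (cc l (k j) (e j) (q j)))\<^sup>2 \<le> 4 / P" using u_bound1[OF kj] by (simp add: P_def)
    have u2: "(cmod (cc l (k j) (e j) (q j)))\<^sup>2 \<le> 4 * P ^ 3 / (real_of_int (q j)) ^ 4" if "q j \<noteq> 0"
      using u_bound2[OF kj that] by (simp add: P_def)
    show ?thesis
    proof (cases "j = i0")
      case True
      then have qj: "q j \<noteq> 0" and Mj: "\<bar>real_of_int (q j)\<bar> = M" using qi0 i0 by auto
      have target: "(if j = i0 then P ^ 2 / M ^ 2 else 1) * w j = 4 * P ^ 2 / M ^ 3"
        using True qj Mj M1 by (simp add: w_def field_simps power2_eq_square power3_eq_cube)
      show ?thesis unfolding target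
      proof (cases "M \<le> P")
        case True
        have "M ^ 3 \<le> P ^ 3" using True M1 by (intro power_mono) auto
        then have "4 * P ^ 2 / P ^ 3 \<le> 4 * P ^ 2 / M ^ 3" using M1 P by (intro div_le_aux) auto
        moreover have "4 * P ^ 2 / P ^ 3 = 4 / P" using P by (simp add: power2_eq_square power3_eq_cube)
        ultimately show "(cmod (cc l (k j) (e j) (q j)))\<^sup>2 \<le> 4 * P ^ 2 / M ^ 3" using u1 by linarith
      next
        case False
        have q4: "(real_of_int (q j)) ^ 4 = M ^ 4" using Mj by (metis power_even_abs_numeral even_numeral)
        have "4 * P ^ 3 / M ^ 4 \<le> 4 * P ^ 2 / M ^ 3"
        proof -
          have "4 * P ^ 3 * M ^ 3 \<le> 4 * P ^ 2 * M ^ 4"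
          proof -
            have "P * (P ^ 2 * M ^ 3) \<le> M * (P ^ 2 * M ^ 3)" using False P M1 by (intro mult_right_mono) auto
            then show ?thesis by (simp add: power2_eq_square power3_eq_cube power4_eq_xxxx mult_ac)
          qed
          then show ?thesis using M1 by (simp add: divide_le_eq le_divide_eq field_simps)
        qed
        then show "(cmod (cc l (k j) (e j) (q j)))\<^sup>2 \<le> 4 * P ^ 2 / M ^ 3" using u2[OF qj] q4 by simp
      qed
    next
      case False
      show ?thesis
      proof (cases "q j = 0")
        case True
        have "4 / P \<le> 4 * 2 powr (- real l0)"
        proof -
          have "4 / P = 4 * 2 powr (- real l)" by (simp add: P_def powr_minus_divide powr_realpow)
          also have "\<dots> \<le> 4 * 2 powr (- real l0)" using l0 by simp
          finally show ?thesis .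
        qed
        then show ?thesis using u1 True False by (simp add: w_def)
      next
        case qj: False
        define m where "m = \<bar>real_of_int (q j)\<bar>"
        have m1: "1 \<le> m" using qj unfolding m_def by linarith
        have "(cmod (cc l (k j) (e j) (q j)))\<^sup>2 \<le> 4 / m"
        proof (cases "m \<le> P")
          case True
          then have "4 / P \<le> 4 / m" using m1 by (intro div_le_aux) auto
          then show ?thesis using u1 by linarith
        next
          case False
          have q4: "(real_of_int (q j)) ^ 4 = m ^ 4" unfolding m_def by (metis power_even_abs_numeral even_numeral)
          have "4 * P ^ 3 / m ^ 4 \<le> 4 / m"
          proof -
            have "P ^ 3 \<le> m ^ 3" using False P by (intro power_mono) auto
            then have "4 * P ^ 3 * m \<le> 4 * m ^ 4"
              using m1 by (simp add: power3_eq_cube power4_eq_xxxx mult_right_mono)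
            then show ?thesis using m1 by (simp add: divide_le_eq le_divide_eq field_simps)
          qed
          then show ?thesis using u2[OF qj] q4 by simp
        qed
        then show ?thesis using False qj by (simp add: w_def m_def)
      qed
    qed
  qed
  have "(\<Prod>j<n. (cmod (cc l (k j) (e j) (q j)))\<^sup>2) \<le> (\<Prod>j<n. (if j = i0 then P ^ 2 / M ^ 2 else 1) * w j)"
    by (intro prod_mono) (use ub in auto)
  also have "\<dots> = P ^ 2 / M ^ 2 * (\<Prod>j<n. w j)"
    using i0 by (simp add: prod.distrib prod.delta)
  also have "(\<Prod>j<n. w j) = (\<Prod>j\<in>S. 4 / \<bar>real_of_int (q j)\<bar>) * (4 * 2 powr (- real l0)) ^ (n - s)"
    unfolding w_def prod_split S_def s_def ..
  also have "(\<Prod>j\<in>S. 4 / \<bar>real_of_int (q j)\<bar>) = 4 ^ s / qhat_pow n q 1"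
    by (simp add: prod_dividef cS qhat_pow_def S_def[symmetric])
  finally have A: "(\<Prod>j<n. (cmod (cc l (k j) (e j) (q j)))\<^sup>2) \<le> P ^ 2 / M ^ 2 * (4 ^ s / qhat_pow n q 1 * (4 * 2 powr (- real l0)) ^ (n - s))" .
  have pw: "(2 powr - real l)\<^sup>2 = 1 / P ^ 2"
    by (simp add: P_def powr_minus_divide powr_realpow power_divide)
  have "(2 powr - real l)\<^sup>2 * (\<Prod>j<n. (cmod (cc l (k j) (e j) (q j)))\<^sup>2) \<le>
      1 / P ^ 2 * (P ^ 2 / M ^ 2 * (4 ^ s / qhat_pow n q 1 * (4 * 2 powr (- real l0)) ^ (n - s)))"
    unfolding pw[symmetric] by (intro mult_left_mono A) auto
  also have "\<dots> = 4 ^ n * (2 powr (- real l0)) ^ (n - s) / (M ^ 2 * qhat_pow n q 1)"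
  proof -
    have "(4::real) ^ s * 4 ^ (n - s) = 4 ^ n" using sn by (simp flip: power_add)
    then show ?thesis using P M1 qhat_pos[of n q 1]
      by (simp add: power_mult_distrib field_simps)
  qed
  also have "(2 powr (- real l0)) ^ (n - s) = 2 powr (- (real n - real s) * real l0)"
    using sn by (subst powr_power) (auto simp: of_nat_diff algebra_simps)
  finally show ?thesis by (simp add: s_def M_def)
qed

lemma q0_bound:
  assumes k: "\<And>i. i < n \<Longrightarrow> 0 \<le> k i \<and> k i < 2 ^ l" and l0: "l0 \<le> l"
  shows "(2 powr - real l)\<^sup>2 * (\<Prod>j<n. (cmod (cc l (k j) (e j) (q j)))\<^sup>2)
     \<le> 4 ^ n * 2 powr (- ((2 + real n) * real l0))"
proof -
  define P :: real where "P = 2 ^ l"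
  have P: "0 < P" by (simp add: P_def)
  have "(\<Prod>j<n. (cmod (cc l (k j) (e j) (q j)))\<^sup>2) \<le> (\<Prod>j<n. 4 / P)"
    by (intro prod_mono) (use k in \<open>auto simp: P_def intro: u_bound1\<close>)
  also have "\<dots> = (4 / P) ^ n" by simp
  finally have A: "(\<Prod>j<n. (cmod (cc l (k j) (e j) (q j)))\<^sup>2) \<le> (4 / P) ^ n" .
  have pw: "(2 powr - real l)\<^sup>2 = 1 / P ^ 2"
    by (simp add: P_def powr_minus_divide powr_realpow power_divide)
  have "(2 powr - real l)\<^sup>2 * (\<Prod>j<n. (cmod (cc l (k j) (e j) (q j)))\<^sup>2) \<le> 1 / P ^ 2 * (4 / P) ^ n"
    unfolding pw[symmetric] by (intro mult_left_mono A) auto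
  also have "\<dots> = 4 ^ n * (1 / P ^ (n + 2))"
    by (simp add: power_divide power_add field_simps power2_eq_square)
  also have "1 / P ^ (n + 2) = 2 powr (- ((2 + real n) * real l))"
  proof -
    have "1 / P ^ (n + 2) = 2 powr (- (real l * real (n + 2)))"
      by (simp only: P_def pow2_powr powr_minus_divide)
    also have "- (real l * real (n + 2)) = - ((2 + real n) * real l)" by (simp add: algebra_simps)
    finally show ?thesis .
  qed
  also have "4 ^ n * 2 powr (- ((2 + real n) * real l)) \<le> 4 ^ n * 2 powr (- ((2 + real n) * real l0))"
    using l0 by (intro mult_left_mono powr_mono) (auto intro: mult_left_mono)
  finally show ?thesis .
qed

lemma J_props:
  assumes "(l, k, e) \<in> J_iso n l0 L"
  shows "l0 \<le> l" "l < L" "\<And>i. i < n \<Longrightarrow> 0 \<le> k i \<and> k i < 2 ^ l"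
  using assms by (auto simp: J_iso_def PiE_def Pi_def)

lemma J_nonempty:
  assumes "l0 < L"
  shows "J_iso n l0 L \<noteq> {}"
proof -
  have "(l0, restrict (\<lambda>_. 0) {..<n}, restrict (\<lambda>_. 0) {..<n}) \<in> J_iso n l0 L"
    using assms by (auto simp: J_iso_def)
  then show ?thesis by blast
qed

lemma Kpow:
  assumes "1 \<le> n"
  shows "8 * pi\<^sup>2 * 4 ^ n \<le> (1000::real) ^ n" "(4::real) ^ n \<le> 1000 ^ n"
proof -
  have pi2: "pi\<^sup>2 \<le> 16"
  proof -
    have "pi * pi \<le> 4 * 4" using pi_less_4 pi_gt3 by (intro mult_mono) auto
    then show ?thesis by (simp add: power2_eq_square)
  qed
  have "(250::real) ^ 1 \<le> 250 ^ n" using assms by (intro power_increasing) auto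
  then have "8 * pi\<^sup>2 \<le> (250::real) ^ n" using pi2 by simp
  then have "8 * pi\<^sup>2 * 4 ^ n \<le> (250::real) ^ n * 4 ^ n" by (intro mult_right_mono) auto
  also have "\<dots> = 1000 ^ n" by (simp flip: power_mult_distrib)
  finally show "8 * pi\<^sup>2 * 4 ^ n \<le> (1000::real) ^ n" .
  show "(4::real) ^ n \<le> 1000 ^ n" by (intro power_mono) auto
qed

lemma main_q0:
  assumes n: "1 \<le> n" and J: "(l, k, e) \<in> J_iso n l0 L"
  shows "(cmod (bil n \<eta> \<beta> \<rho> (psi_iso_hat n l k e) (xi_hat n (\<lambda>_. 0))))\<^sup>2
     \<le> 1000 ^ n * \<rho>\<^sup>2 * 2 powr (- ((2 + real n) * real l0))"
proof -
  note k = J_props(3)[OF J]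
  have Q0: "qnorm2_sq n (\<lambda>_. 0) = 0" by (simp add: qnorm2_sq_def)
  have N1: "NN n (\<lambda>_. 0) = 1" by (simp add: NN_def Q0)
  have "(cmod (bil n \<eta> \<beta> \<rho> (psi_iso_hat n l k e) (xi_hat n (\<lambda>_. 0))))\<^sup>2 =
      \<rho>\<^sup>2 * ((2 powr - real l)\<^sup>2 * (\<Prod>j<n. (cmod (cc l (k j) (e j) ((\<lambda>_. 0) j)))\<^sup>2))"
    using bil_norm[where n=n and k=k and l=l and \<eta>=\<eta> and \<beta>=\<beta> and \<rho>=\<rho> and e=e and q="\<lambda>_. 0", OF k] unfolding Q0 N1 by simp
  also have "\<dots> \<le> \<rho>\<^sup>2 * (4 ^ n * 2 powr (- ((2 + real n) * real l0)))"
    by (intro mult_left_mono q0_bound[OF k J_props(1)[OF J]]) auto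
  also have "\<dots> \<le> \<rho>\<^sup>2 * (1000 ^ n * 2 powr (- ((2 + real n) * real l0)))"
    using Kpow(2)[OF n] by (intro mult_left_mono mult_right_mono) auto
  finally show ?thesis by (simp add: mult_ac)
qed

lemma main_qnz:
  assumes n: "1 \<le> n" and J: "(l, k, e) \<in> J_iso n l0 L" and qnz: "\<exists>i<n. q i \<noteq> 0"
  shows "(cmod (bil n \<eta> \<beta> \<rho> (psi_iso_hat n l k e) (xi_hat n q)))\<^sup>2
     \<le> 1000 ^ n *
            (\<eta>\<^sup>2 + (\<Sum>i<n. (\<beta> i)\<^sup>2) / qnorm2_sq n q + \<rho>\<^sup>2 / (qnorm2_sq n q)\<^sup>2) *
            min ((1 + 2 powr (2 * (- real n / 2 + 2 * real (qnorm0 n q) - 1) * real L))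
                   * qnorm2_sq n q / qhat_pow n q 4)
                (2 powr (- (real n - real (qnorm0 n q)) * real l0) * qnorm2_sq n q
                   / ((qnorm_inf n q)\<^sup>2 * qhat_pow n q 1))"
proof -
  note k = J_props(3)[OF J]
  define Q where "Q = qnorm2_sq n q"
  define B where "B = (\<Sum>i<n. (\<beta> i)\<^sup>2)"
  define C where "C = (\<Sum>i<n. \<beta> i * of_int (q i))"
  define W where "W = \<eta>\<^sup>2 + B / Q + \<rho>\<^sup>2 / Q\<^sup>2"
  define X where "X = (2 powr - real l)\<^sup>2 * (\<Prod>j<n. (cmod (cc l (k j) (e j) (q j)))\<^sup>2)"
  define B1 where "B1 = (1 + 2 powr (2 * (- real n / 2 + 2 * real (qnorm0 n q) - 1) * real L)) * Q / qhat_pow n q 4"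
  define B2 where "B2 = 2 powr (- (real n - real (qnorm0 n q)) * real l0) * Q / ((qnorm_inf n q)\<^sup>2 * qhat_pow n q 1)"
  obtain i1 where i1: "i1 < n" "q i1 \<noteq> 0" using qnz by auto
  have Q1: "1 \<le> Q"
  proof -
    have a: "1 \<le> \<bar>real_of_int (q i1)\<bar>" using i1 by linarith
    have "1 * 1 \<le> \<bar>real_of_int (q i1)\<bar> * \<bar>real_of_int (q i1)\<bar>" using a by (intro mult_mono) auto
    then have "1 \<le> (real_of_int (q i1))\<^sup>2" by (simp add: power2_eq_square)
    also have "\<dots> \<le> Q" unfolding Q_def qnorm2_sq_def using i1 by (intro member_le_sum) auto
    finally show ?thesis .
  qed
  have B0: "0 \<le> B" unfolding B_def by (intro sum_nonneg) auto
  have CS: "C\<^sup>2 \<le> B * Q" unfolding C_def B_def Q_def qnorm2_sq_def by (rule Cauchy_Schwarz_ineq_sum)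
  have X0: "0 \<le> X" unfolding X_def by (intro mult_nonneg_nonneg prod_nonneg) auto
  have W0: "0 \<le> W" unfolding W_def using B0 Q1 by (intro add_nonneg_nonneg divide_nonneg_nonneg) auto
  have val: "(cmod (bil n \<eta> \<beta> \<rho> (psi_iso_hat n l k e) (xi_hat n q)))\<^sup>2 =
      (1 / (1 + 4 * pi\<^sup>2 * Q) * ((\<eta> * 4 * pi\<^sup>2 * Q + \<rho>)\<^sup>2 + (2 * pi * C)\<^sup>2)) * X"
    using bil_norm[where n=n and k=k and l=l and \<eta>=\<eta> and \<beta>=\<beta> and \<rho>=\<rho> and e=e and q=q, OF k]
    unfolding X_def Q_def C_def by (simp add: NN_sq power_mult_distrib mult_ac)
  also have "\<dots> \<le> (8 * pi\<^sup>2 * Q * W) * X"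
    unfolding W_def by (intro mult_right_mono NY_bound Q1 B0 CS X0)
  also have "\<dots> = 8 * pi\<^sup>2 * W * (Q * X)" by (simp add: mult_ac)
  also have "\<dots> \<le> 8 * pi\<^sup>2 * W * (4 ^ n * min B1 B2)"
  proof -
    have "Q * X \<le> Q * (4 ^ n * (1 + 2 powr (2 * (- real n / 2 + 2 * real (qnorm0 n q) - 1) * real L)) / qhat_pow n q 4)"
      unfolding X_def using Q1 by (intro mult_left_mono B1_bound[OF k] less_imp_le[OF J_props(2)[OF J]]) auto
    also have "\<dots> = 4 ^ n * B1" by (simp add: B1_def)
    finally have a: "Q * X \<le> 4 ^ n * B1" .
    have "Q * X \<le> Q * (4 ^ n * 2 powr (- (real n - real (qnorm0 n q)) * real l0) / ((qnorm_inf n q)\<^sup>2 * qhat_pow n q 1))"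
      unfolding X_def using Q1 by (intro mult_left_mono B2_bound[OF k J_props(1)[OF J] qnz]) auto
    also have "\<dots> = 4 ^ n * B2" by (simp add: B2_def)
    finally have b: "Q * X \<le> 4 ^ n * B2" .
    have "Q * X \<le> 4 ^ n * min B1 B2" using a b by (simp add: min_def)
    then show ?thesis using W0 by (intro mult_left_mono) auto
  qed
  also have "\<dots> = (8 * pi\<^sup>2 * 4 ^ n) * (W * min B1 B2)" by (simp add: mult_ac)
  also have "\<dots> \<le> 1000 ^ n * (W * min B1 B2)"
  proof -
    have "0 \<le> B1" unfolding B1_def using Q1 qhat_pos[of n q 4]
      by (intro divide_nonneg_pos mult_nonneg_nonneg add_nonneg_nonneg) auto
    moreover have "0 \<le> B2" unfolding B2_def using Q1 qhat_pos[of n q 1]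
      by (intro divide_nonneg_nonneg mult_nonneg_nonneg) auto
    ultimately have "0 \<le> W * min B1 B2" using W0 by auto
    then show ?thesis using Kpow(1)[OF n] by (intro mult_right_mono) auto
  qed
  finally show ?thesis by (simp add: W_def B1_def B2_def Q_def B_def mult_ac)
qed

theorem theorem4p11:
  "\<exists>K>0. \<forall>n l0 L \<eta> \<rho> (\<beta> :: nat \<Rightarrow> real).
     1 < n \<and> 2 \<le> l0 \<and> l0 < L \<longrightarrow>
       mu n l0 L \<eta> \<beta> \<rho> (\<lambda>_. 0) \<le> K ^ n * \<rho>\<^sup>2 * 2 powr (- ((2 + real n) * real l0))
     \<and> (\<forall>q :: nat \<Rightarrow> int. (\<exists>i<n. q i \<noteq> 0) \<longrightarrow>
          mu n l0 L \<eta> \<beta> \<rho> q \<le> K ^ n *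
            (\<eta>\<^sup>2 + (\<Sum>i<n. (\<beta> i)\<^sup>2) / qnorm2_sq n q + \<rho>\<^sup>2 / (qnorm2_sq n q)\<^sup>2) *
            min ((1 + 2 powr (2 * (- real n / 2 + 2 * real (qnorm0 n q) - 1) * real L))
                   * qnorm2_sq n q / qhat_pow n q 4)
                (2 powr (- (real n - real (qnorm0 n q)) * real l0) * qnorm2_sq n q
                   / ((qnorm_inf n q)\<^sup>2 * qhat_pow n q 1)))"
proof (rule exI[of _ 1000], intro conjI allI impI)
  show "(0::real) < 1000" by simp
next
  fix n l0 L :: nat and \<eta> \<rho> :: real and \<beta> :: "nat \<Rightarrow> real"
  assume h: "1 < n \<and> 2 \<le> l0 \<and> l0 < L"
  then have n: "1 \<le> n" by simp
  have ne: "J_iso n l0 L \<noteq> {}" using J_nonempty h by blast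
  show "mu n l0 L \<eta> \<beta> \<rho> (\<lambda>_. 0) \<le> 1000 ^ n * \<rho>\<^sup>2 * 2 powr (- ((2 + real n) * real l0))"
    unfolding mu_def
  proof (rule cSUP_least[OF ne])
    fix j assume j: "j \<in> J_iso n l0 L"
    obtain l k e where lke: "j = (l, k, e)" by (cases j) auto
    show "(case j of (l, k, e) \<Rightarrow> (cmod (bil n \<eta> \<beta> \<rho> (psi_iso_hat n l k e) (xi_hat n (\<lambda>_. 0))))\<^sup>2)
        \<le> 1000 ^ n * \<rho>\<^sup>2 * 2 powr (- ((2 + real n) * real l0))"
      using main_q0[OF n j[unfolded lke]] lke by simp
  qed
  fix q :: "nat \<Rightarrow> int"
  assume qnz: "\<exists>i<n. q i \<noteq> 0"
  show "mu n l0 L \<eta> \<beta> \<rho> q \<le> 1000 ^ n *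
            (\<eta>\<^sup>2 + (\<Sum>i<n. (\<beta> i)\<^sup>2) / qnorm2_sq n q + \<rho>\<^sup>2 / (qnorm2_sq n q)\<^sup>2) *
            min ((1 + 2 powr (2 * (- real n / 2 + 2 * real (qnorm0 n q) - 1) * real L))
                   * qnorm2_sq n q / qhat_pow n q 4)
                (2 powr (- (real n - real (qnorm0 n q)) * real l0) * qnorm2_sq n q
                   / ((qnorm_inf n q)\<^sup>2 * qhat_pow n q 1))"
    unfolding mu_def
  proof (rule cSUP_least[OF ne])
    fix j assume j: "j \<in> J_iso n l0 L"
    obtain l k e where lke: "j = (l, k, e)" by (cases j) auto
    show "(case j of (l, k, e) \<Rightarrow> (cmod (bil n \<eta> \<beta> \<rho> (psi_iso_hat n l k e) (xi_hat n q)))\<^sup>2) \<le> 1000 ^ n *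
            (\<eta>\<^sup>2 + (\<Sum>i<n. (\<beta> i)\<^sup>2) / qnorm2_sq n q + \<rho>\<^sup>2 / (qnorm2_sq n q)\<^sup>2) *
            min ((1 + 2 powr (2 * (- real n / 2 + 2 * real (qnorm0 n q) - 1) * real L))
                   * qnorm2_sq n q / qhat_pow n q 4)
                (2 powr (- (real n - real (qnorm0 n q)) * real l0) * qnorm2_sq n q
                   / ((qnorm_inf n q)\<^sup>2 * qhat_pow n q 1))"
      using main_qnz[OF n j[unfolded lke] qnz] lke by simp
  qed
qed

end
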